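(* Let $Y=T\times_H\mathfrak h^\circ\times\mathbb C^{h+1}$ be a tall local model with defining polynomial $P(z)=\prod_{i=0}^h z_i^{\xi_i}$, and assume $\xi_i=0$ for all $i>k$. Let $K=\{\lambda\in(S^1)^{k+1}\mid\prod_{j=0}^k\lambda_j^{\xi_j}=1\}$ act naturally on $\mathbb C^{k+1}$ (with homogeneous moment map). Then the inclusion $\mathbb C^{k+1}\hookrightarrow Y$, $(z_0,\dots,z_k)\mapsto[1,0,(z_0,\dots,z_k,0,\dots,0)]$, induces a diffeomorphism $\mathbb C^{k+1}/\!/K\to Y/\!/T$. In particular, if $P(z)=z_0$ then $\overline P\colon Y/\!/T\to\mathbb C$ is a diffeomorphism with inverse $z\mapsto[1,0,(z,0)]$.
   Context: $T$ is a torus with Lie algebra $\mathfrak t$, $H\subseteq T$ a closed subgroup of dimension $h$ with Lie algebra $\mathfrak h$, $\rho\colon H\to(S^1)^{h+1}$ an injective homomorphism, $\eta_i\in\mathfrak h^*$ the differential of the $i$-th component of $\rho$. A fixed inner product on $\mathfrak t$ identifies $\mathfrak t^*\cong\mathfrak h^\circ\oplus\mathfrak h^*$. The local model is $Y=T\times_H\mathfrak h^\circ\times\mathbb C^{h+1}$ ($H$ acting on $T$ by multiplication, trivially on $\mathfrak h^\circ$, on $\mathbb C^{h+1}$ by $h\cdot z=\rho(h^{-1})z$) with its canonical symplectic form, $T$-action $s\cdot[t,\alpha,z]=[st,\alpha,z]$ and moment map $\Phi_Y([t,\alpha,z])=\alpha+\frac12\sum_i\eta_i|z_i|^2$. $Y$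 is tall if $\Phi_Y^{-1}(0)$ contains more than one $T$-orbit; then there is a unique $\xi\in\mathbb Z_{\ge0}^{h+1}$ with $\lambda\mapsto\prod_j\lambda_j^{\xi_j}$ giving a short exact sequence $1\to H\xrightarrow{\rho}(S^1)^{h+1}\to S^1\to1$, and the defining polynomial is $P(z)=\prod_jz_j^{\xi_j}$ (also viewed on $Y$). Reduced spaces $X/\!/G=\Phi^{-1}(0)/G$ carry the subquotient topology and the sheaf of functions whose pullback to $\Phi^{-1}(0)$ extends to a smooth invariant function; diffeomorphisms are homeomorphisms inducing isomorphisms of these sheaves; $\overline P$ is the map induced by $P$ on $Y/\!/T$. *)

theory Defs
  imports "HOL-Analysis.Analysis"
begin

definition pdir :: "'a::euclidean_space \<Rightarrow> ('a \<Rightarrow> real) \<Rightarrow> 'a \<Rightarrow> real" where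
  "pdir v f x = (THE D. ((\<lambda>t::real. f (x + t *\<^sub>R v)) has_real_derivative D) (at 0))"

fun pdirs :: "'a::euclidean_space list \<Rightarrow> ('a \<Rightarrow> real) \<Rightarrow> 'a \<Rightarrow> real" where
  "pdirs [] f = f"
| "pdirs (v # vs) f = pdir v (pdirs vs f)"

definition smooth_on :: "'a::euclidean_space set \<Rightarrow> ('a \<Rightarrow> real) \<Rightarrow> bool" where
  "smooth_on V f \<longleftrightarrow> open V \<and>
     (\<forall>vs. set vs \<subseteq> Basis \<longrightarrow>
        continuous_on V (pdirs vs f) \<and>
        (\<forall>v\<in>Basis. \<forall>x\<in>V. (\<lambda>t::real. pdirs vs f (x + t *\<^sub>R v)) differentiable (at 0)))"

definition smooth_sub :: "'a::euclidean_space set \<Rightarrow> 'a set \<Rightarrow> ('a \<Rightarrow> real) \<Rightarrow> bool" where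
  "smooth_sub M W F \<longleftrightarrow> (\<exists>V F'. open V \<and> V \<inter> M = W \<and> smooth_on V F' \<and> (\<forall>x\<in>W. F' x = F x))"

definition orb :: "('a \<Rightarrow> 'a) set \<Rightarrow> 'a \<Rightarrow> 'a set" where
  "orb G x = {g x | g. g \<in> G}"

definition rpts :: "('a \<Rightarrow> 'a) set \<Rightarrow> 'a set \<Rightarrow> 'a set set" where
  "rpts G Z = orb G ` Z"

definition r_open :: "('a::topological_space \<Rightarrow> 'a) set \<Rightarrow> 'a set \<Rightarrow> 'a set set \<Rightarrow> bool" where
  "r_open G Z U \<longleftrightarrow> U \<subseteq> rpts G Z \<and> openin (top_of_set Z) (\<Union>U)"

definition r_smooth :: "'a::euclidean_space set \<Rightarrow> ('a \<Rightarrow> 'a) set \<Rightarrow> 'a set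
      \<Rightarrow> 'a set set \<Rightarrow> ('a set \<Rightarrow> real) \<Rightarrow> bool" where
  "r_smooth M G Z U f \<longleftrightarrow> (\<exists>W F. openin (top_of_set M) W \<and> (\<forall>g\<in>G. \<forall>x\<in>W. g x \<in> W) \<and>
      W \<inter> Z = \<Union>U \<and> smooth_sub M W F \<and> (\<forall>g\<in>G. \<forall>x\<in>W. F (g x) = F x) \<and>
      (\<forall>x\<in>\<Union>U. F x = f (orb G x)))"

text \<open>Diffeomorphism between spaces given by (points, open sets, smooth functions on opens).\<close>
definition diffeo :: "'p set \<Rightarrow> ('p set \<Rightarrow> bool) \<Rightarrow> ('p set \<Rightarrow> ('p \<Rightarrow> real) \<Rightarrow> bool)
    \<Rightarrow> 'q set \<Rightarrow> ('q set \<Rightarrow> bool) \<Rightarrow> ('q set \<Rightarrow> ('q \<Rightarrow> real) \<Rightarrow> bool) \<Rightarrow> ('p \<Rightarrow> 'q) \<Rightarrow> bool" where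
  "diffeo P1 O1 S1 P2 O2 S2 \<phi> \<longleftrightarrow> bij_betw \<phi> P1 P2 \<and>
     (\<forall>U. U \<subseteq> P2 \<longrightarrow> (O2 U \<longleftrightarrow> O1 (\<phi> -` U \<inter> P1))) \<and>
     (\<forall>U f. O2 U \<longrightarrow> (S2 U f \<longleftrightarrow> S1 (\<phi> -` U \<inter> P1) (f \<circ> \<phi>)))"

definition torus :: "(complex^'n) set" where
  "torus = {t. \<forall>j. cmod (t $ j) = 1}"

definition expT :: "real^'n \<Rightarrow> complex^'n" where
  "expT X = (\<chi> j. cis (X $ j))"

definition vinv :: "complex^'n \<Rightarrow> complex^'n" where
  "vinv a = (\<chi> j. inverse (a $ j))"

definition closed_subgroup :: "(complex^'n) set \<Rightarrow> bool" where
  "closed_subgroup H \<longleftrightarrow> H \<subseteq> torus \<and> 1 \<in> H \<and> (\<forall>a\<in>H. \<forall>b\<in>H. a * b \<in> H) \<and>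
     (\<forall>a\<in>H. vinv a \<in> H) \<and> closed H"

definition lie_alg :: "(complex^'n) set \<Rightarrow> (real^'n) set" where
  "lie_alg H = {X. \<forall>s::real. expT (s *\<^sub>R X) \<in> H}"

text \<open>Differential eta_i of the i-th component of rho (Lie algebra of S^1 identified with R via cis).\<close>
definition eta :: "(complex^'n \<Rightarrow> complex^'m) \<Rightarrow> 'm \<Rightarrow> real^'n \<Rightarrow> real" where
  "eta \<rho> i X = (THE c. \<forall>s::real. \<rho> (expT (s *\<^sub>R X)) $ i = cis (s * c))"

text \<open>Annihilator of h in t* (t* identified with R^n via the dot product).\<close>
definition annih :: "(complex^'n) set \<Rightarrow> (real^'n) set" where
  "annih H = {\<alpha>. \<forall>X\<in>lie_alg H. \<alpha> \<bullet> X = 0}"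

text \<open>eta_i viewed in t* = h\<degree> \<oplus> h*: the extension vanishing on the B-orthogonal complement of h.\<close>
definition etaT :: "real^'n^'n \<Rightarrow> (complex^'n) set \<Rightarrow> (complex^'n \<Rightarrow> complex^'m) \<Rightarrow> 'm \<Rightarrow> real^'n" where
  "etaT B H \<rho> i = (THE v. (\<forall>X\<in>lie_alg H. v \<bullet> X = eta \<rho> i X) \<and>
      (\<forall>Y. (\<forall>X\<in>lie_alg H. X \<bullet> (B *v Y) = 0) \<longrightarrow> v \<bullet> Y = 0))"

definition MY :: "(complex^'n) set \<Rightarrow> ((complex^'n) \<times> (real^'n) \<times> (complex^'m)) set" where
  "MY H = torus \<times> annih H \<times> UNIV"

definition PhiY :: "real^'n^'n \<Rightarrow> (complex^'n) set \<Rightarrow> (complex^'n \<Rightarrow> complex^'m)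
    \<Rightarrow> (complex^'n) \<times> (real^'n) \<times> (complex^'m) \<Rightarrow> real^'n" where
  "PhiY B H \<rho> p = (case p of (t, \<alpha>, z) \<Rightarrow>
      \<alpha> + (1/2) *\<^sub>R (\<Sum>i\<in>UNIV. (cmod (z $ i))\<^sup>2 *\<^sub>R etaT B H \<rho> i))"

definition ZY :: "real^'n^'n \<Rightarrow> (complex^'n) set \<Rightarrow> (complex^'n \<Rightarrow> complex^'m)
    \<Rightarrow> ((complex^'n) \<times> (real^'n) \<times> (complex^'m)) set" where
  "ZY B H \<rho> = {p \<in> MY H. PhiY B H \<rho> p = 0}"

text \<open>Combined action: T acting by s\<cdot>[t,\<alpha>,z] = [st,\<alpha>,z], together with the H-action
  h\<cdot>(t,\<alpha>,z) = (ht, \<alpha>, rho(h^-1) z) defining the quotient T \<times>_H (h\<degree> \<times> C^(h+1)).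
  T-orbits in Y correspond to orbits of this action on representatives.\<close>
definition GY :: "(complex^'n) set \<Rightarrow> (complex^'n \<Rightarrow> complex^'m)
    \<Rightarrow> ((complex^'n) \<times> (real^'n) \<times> (complex^'m) \<Rightarrow> (complex^'n) \<times> (real^'n) \<times> (complex^'m)) set" where
  "GY H \<rho> = {(\<lambda>(t, \<alpha>, z). (s * h * t, \<alpha>, \<rho> (vinv h) * z)) | s h. s \<in> torus \<and> h \<in> H}"

definition polyP :: "('m \<Rightarrow> nat) \<Rightarrow> complex^'m \<Rightarrow> complex" where
  "polyP \<xi> z = (\<Prod>i\<in>UNIV. (z $ i) ^ (\<xi> i))"

definition Pbar :: "('m \<Rightarrow> nat) \<Rightarrow> ((complex^'n) \<times> (real^'n) \<times> (complex^'m)) set \<Rightarrow> complex" where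
  "Pbar \<xi> c = polyP \<xi> (snd (snd (SOME p. p \<in> c)))"

definition tall :: "real^'n^'n \<Rightarrow> (complex^'n) set \<Rightarrow> (complex^'n \<Rightarrow> complex^'m) \<Rightarrow> bool" where
  "tall B H \<rho> \<longleftrightarrow> (\<exists>c1\<in>rpts (GY H \<rho>) (ZY B H \<rho>). \<exists>c2\<in>rpts (GY H \<rho>) (ZY B H \<rho>). c1 \<noteq> c2)"

text \<open>1 \<rightarrow> H \<rightarrow> (S^1)^(h+1) \<rightarrow> S^1 \<rightarrow> 1 exact, second map \<lambda> \<mapsto> \<Prod> \<lambda>_j^\<xi>_j.\<close>
definition exact_seq :: "(complex^'n) set \<Rightarrow> (complex^'n \<Rightarrow> complex^'m) \<Rightarrow> ('m \<Rightarrow> nat) \<Rightarrow> bool" where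
  "exact_seq H \<rho> \<xi> \<longleftrightarrow> inj_on \<rho> H \<and> polyP \<xi> ` torus = {w. cmod w = 1} \<and>
     {l\<in>torus. polyP \<xi> l = 1} = \<rho> ` H"

definition Kgrp :: "('k \<Rightarrow> 'm) \<Rightarrow> ('m \<Rightarrow> nat) \<Rightarrow> (complex^'k) set" where
  "Kgrp \<iota> \<xi> = {l\<in>torus. (\<Prod>j\<in>UNIV. (l $ j) ^ (\<xi> (\<iota> j))) = 1}"

definition GK :: "(complex^'k) set \<Rightarrow> (complex^'k \<Rightarrow> complex^'k) set" where
  "GK K = {(\<lambda>z. l * z) | l. l \<in> K}"

definition muK :: "complex^'k \<Rightarrow> real^'k \<Rightarrow> real" where
  "muK z X = (1/2) * (\<Sum>j\<in>UNIV. X $ j * (cmod (z $ j))\<^sup>2)"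

definition ZK :: "(complex^'k) set \<Rightarrow> (complex^'k) set" where
  "ZK K = {z. \<forall>X\<in>lie_alg K. muK z X = 0}"

text \<open>Inclusion C^(k+1) \<rightarrow> Y, z \<mapsto> [1, 0, (z, 0)] (coordinates placed via \<iota>).\<close>
definition inclY :: "('k \<Rightarrow> 'm) \<Rightarrow> complex^'k \<Rightarrow> (complex^'n) \<times> (real^'n) \<times> (complex^'m)" where
  "inclY \<iota> z = (1, 0, \<chi> i. if i \<in> range \<iota> then z $ (inv \<iota> i) else 0)"

definition induced :: "(complex^'n) set \<Rightarrow> (complex^'n \<Rightarrow> complex^'m) \<Rightarrow> ('k \<Rightarrow> 'm)
    \<Rightarrow> (complex^'k) set \<Rightarrow> ((complex^'n) \<times> (real^'n) \<times> (complex^'m)) set" where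
  "induced H \<rho> \<iota> c = orb (GY H \<rho>) (inclY \<iota> (SOME z. z \<in> c))"

end

theory Submission
  imports Defs
begin


lemma const_deriv0: "((\<lambda>t. k) has_real_derivative D) (at x) \<Longrightarrow> D = 0"
  using DERIV_unique DERIV_const by blast

lemma pdir_zero: "pdir 0 f x = 0"
  unfolding pdir_def by (auto intro!: the_equality dest: const_deriv0)

lemma pdir_comp:
  assumes "\<And>t. A (x + t *\<^sub>R v) = A x + t *\<^sub>R w"
  shows "pdir v (g \<circ> A) x = pdir w g (A x)"
  unfolding pdir_def using assms by simp

lemma pdirs_zero_fun: "pdirs vs (\<lambda>_. 0) = (\<lambda>_. 0)"
  by (induction vs) (auto simp: fun_eq_iff pdir_def intro!: the_equality dest: const_deriv0)

lemma pdirs_with0: "0 \<in> set vs \<Longrightarrow> pdirs vs f = (\<lambda>_. 0)"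
proof (induction vs)
  case Nil then show ?case by simp
next
  case (Cons v vs)
  show ?case
  proof (cases "v = 0")
    case True then show ?thesis by (simp add: fun_eq_iff pdir_zero)
  next
    case False
    then have "0 \<in> set vs" using Cons by simp
    then show ?thesis using Cons pdirs_zero_fun[of "[v]"] by simp
  qed
qed

lemma pdirs_comp:
  assumes "linear L"
  shows "pdirs vs (f \<circ> (\<lambda>x. L x + c)) = pdirs (map L vs) f \<circ> (\<lambda>x. L x + c)"
proof (induction vs)
  case Nil then show ?case by simp
next
  case (Cons v vs)
  have "pdir v (pdirs (map L vs) f \<circ> (\<lambda>x. L x + c)) x = pdir (L v) (pdirs (map L vs) f) (L x + c)" for x
    by (rule pdir_comp) (simp add: linear_add[OF assms] linear_scale[OF assms] algebra_simps)
  then show ?case by (simp only: pdirs.simps Cons.IH) (simp add: fun_eq_iff)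
qed

lemma smooth_on_comp:
  fixes L :: "'a::euclidean_space \<Rightarrow> 'b::euclidean_space"
  assumes sm: "smooth_on V f" and lin: "linear L" and bas: "\<forall>b\<in>Basis. L b \<in> Basis \<or> L b = 0"
  shows "smooth_on ((\<lambda>x. L x + c) -` V) (f \<circ> (\<lambda>x. L x + c))"
proof -
  let ?A = "\<lambda>x. L x + c"
  have contA: "continuous_on UNIV ?A"
    using lin by (intro continuous_intros) (simp add: linear_continuous_on linear_conv_bounded_linear)
  have opV: "open V" using sm by (simp add: smooth_on_def)
  have op: "open (?A -` V)"
    using open_vimage[OF opV contA] .
  have "continuous_on (?A -` V) (pdirs vs (f \<circ> ?A)) \<and>
        (\<forall>v\<in>Basis. \<forall>x\<in>?A -` V. (\<lambda>t::real. pdirs vs (f \<circ> ?A) (x + t *\<^sub>R v)) differentiable (at 0))"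
    if vs: "set vs \<subseteq> Basis" for vs
  proof (cases "0 \<in> set (map L vs)")
    case True
    have e: "pdirs vs (f \<circ> ?A) = (\<lambda>_. 0)"
      by (simp only: pdirs_comp[OF lin] pdirs_with0[OF True]) (simp add: o_def)
    show ?thesis by (simp only: e) simp
  next
    case False
    then have mb: "set (map L vs) \<subseteq> Basis" using vs bas by auto
    then have c1: "continuous_on V (pdirs (map L vs) f)" and
      d1: "\<And>w x. w \<in> Basis \<Longrightarrow> x \<in> V \<Longrightarrow> (\<lambda>t::real. pdirs (map L vs) f (x + t *\<^sub>R w)) differentiable (at 0)"
      using sm unfolding smooth_on_def by blast+
    have "continuous_on (?A -` V) (pdirs (map L vs) f \<circ> ?A)"
      by (rule continuous_on_compose) (auto intro: continuous_on_subset[OF contA] continuous_on_subset[OF c1])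
    moreover have "(\<lambda>t::real. pdirs (map L vs) f (?A (x + t *\<^sub>R v))) differentiable (at 0)"
      if "v \<in> Basis" "x \<in> ?A -` V" for v x
    proof -
      have eq: "?A (x + t *\<^sub>R v) = ?A x + t *\<^sub>R L v" for t
        by (simp add: linear_add[OF lin] linear_scale[OF lin] algebra_simps)
      show ?thesis
      proof (cases "L v = 0")
        case True then show ?thesis by (simp add: eq)
      next
        case False
        then have "L v \<in> Basis" using bas that by auto
        then show ?thesis using d1[of "L v" "?A x"] that by (simp add: eq)
      qed
    qed
    ultimately show ?thesis by (simp add: pdirs_comp[OF lin])
  qed
  then show ?thesis using op unfolding smooth_on_def by blast
qed

lemma ev_line:
  fixes x :: "'a::real_normed_vector"
  assumes "open U" "x \<in> U"
  shows "eventually (\<lambda>t::real. x + t *\<^sub>R v \<in> U) (nhds 0)"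
proof -
  obtain e where e: "e > 0" "ball x e \<subseteq> U" using assms open_contains_ball by blast
  have "\<forall>t. dist t 0 < e / (norm v + 1) \<longrightarrow> x + t *\<^sub>R v \<in> U"
  proof (intro allI impI)
    fix t :: real assume "dist t 0 < e / (norm v + 1)"
    then have "\<bar>t\<bar> < e / (norm v + 1)" by simp
    moreover have "norm v + 1 > 0" using norm_ge_zero[of v] by linarith
    ultimately have "\<bar>t\<bar> * (norm v + 1) < e"
      by (simp add: pos_less_divide_eq)
    moreover have "\<bar>t\<bar> * norm v \<le> \<bar>t\<bar> * (norm v + 1)" by (simp add: mult_left_mono)
    ultimately have "dist x (x + t *\<^sub>R v) < e" by (simp add: dist_norm)
    then show "x + t *\<^sub>R v \<in> U" using e by auto
  qed
  moreover have "e / (norm v + 1) > 0"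
    using e(1) norm_ge_zero[of v] by (intro divide_pos_pos) linarith+
  ultimately show ?thesis unfolding eventually_nhds_metric by blast
qed

lemma pdirs_local:
  assumes "open U" "\<forall>x\<in>U. f x = g x"
  shows "\<forall>x\<in>U. pdirs vs f x = pdirs vs g x"
proof (induction vs)
  case Nil then show ?case using assms by simp
next
  case (Cons v vs)
  show ?case
  proof
    fix x assume x: "x \<in> U"
    have ev: "eventually (\<lambda>t::real. pdirs vs f (x + t *\<^sub>R v) = pdirs vs g (x + t *\<^sub>R v)) (nhds 0)"
    proof -
      have "eventually (\<lambda>t. x + t *\<^sub>R v \<in> U) (nhds 0)"
        using ev_line assms(1) x by blast
      then show ?thesis by eventually_elim (use Cons in auto)
    qed
    have "((\<lambda>t. pdirs vs f (x + t *\<^sub>R v)) has_real_derivative D) (at 0) \<longleftrightarrow>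
          ((\<lambda>t. pdirs vs g (x + t *\<^sub>R v)) has_real_derivative D) (at 0)" for D
      by (rule DERIV_cong_ev[OF refl ev refl])
    then show "pdirs (v # vs) f x = pdirs (v # vs) g x" by (simp add: pdir_def)
  qed
qed

lemma smooth_on_local:
  fixes f :: "'a::euclidean_space \<Rightarrow> real"
  assumes sm: "smooth_on V f" and U: "open U" "U \<subseteq> V" and eq: "\<forall>x\<in>U. f x = g x"
  shows "smooth_on U g"
  unfolding smooth_on_def
proof (intro conjI allI impI ballI)
  show "open U" by fact
  fix vs :: "'a list" assume vs: "set vs \<subseteq> Basis"
  have pe: "\<forall>x\<in>U. pdirs vs f x = pdirs vs g x" by (rule pdirs_local[OF U(1) eq])
  have "continuous_on U (pdirs vs f)"
    using sm vs U(2) continuous_on_subset unfolding smooth_on_def by blast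
  then show "continuous_on U (pdirs vs g)"
    using continuous_on_cong[OF refl, of U "pdirs vs f" "pdirs vs g"] pe by auto
  fix v x :: 'a assume v: "v \<in> Basis" and x: "x \<in> U"
  have d: "(\<lambda>t::real. pdirs vs f (x + t *\<^sub>R v)) differentiable (at 0)"
    using sm vs v x U(2) unfolding smooth_on_def by blast
  have "eventually (\<lambda>t::real. x + t *\<^sub>R v \<in> U) (nhds 0)"
    using ev_line U(1) x by blast
  then have ev: "eventually (\<lambda>t::real. pdirs vs f (x + t *\<^sub>R v) = pdirs vs g (x + t *\<^sub>R v)) (nhds 0)"
    by eventually_elim (use pe in auto)
  from d obtain D where "((\<lambda>t. pdirs vs f (x + t *\<^sub>R v)) has_real_derivative D) (at 0)"
    using real_differentiable_def by blast
  then have "((\<lambda>t. pdirs vs g (x + t *\<^sub>R v)) has_real_derivative D) (at 0)"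
    using DERIV_cong_ev[OF refl ev refl] by blast
  then show "(\<lambda>t::real. pdirs vs g (x + t *\<^sub>R v)) differentiable (at 0)"
    using real_differentiable_def by blast
qed


lemma cis_all_one: assumes "\<forall>s. cis (s * a) = 1" shows "a = 0"
proof (rule ccontr)
  assume "a \<noteq> 0"
  then have "cis ((pi / a) * a) = 1" using assms by blast
  with \<open>a \<noteq> 0\<close> show False by simp
qed

lemma cis_all_eq: assumes "\<forall>s. cis (s * c) = cis (s * d)" shows "c = d"
proof -
  have "\<forall>s. cis (s * (c - d)) = 1"
  proof
    fix s
    have "cis (s * c) / cis (s * d) = 1" using assms by simp
    then show "cis (s * (c - d)) = 1" by (simp add: cis_divide right_diff_distrib)
  qed
  then show ?thesis using cis_all_one by fastforce
qed

lemma cauchy_additive: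
  fixes k :: "real \<Rightarrow> complex"
  assumes cont: "continuous_on UNIV k" and add: "\<And>x y. k (x + y) = k x + k y"
  shows "k x = of_real x * k 1"
proof -
  define d where "d x = k x - of_real x * k 1" for x
  have dadd: "d (x + y) = d x + d y" for x y
    unfolding d_def by (simp add: add distrib_right)
  have d0: "d 0 = 0" using dadd[of 0 0] by simp
  have dneg: "d (- x) = - d x" for x 
  proof -
    have "d x + d (-x) = 0" using dadd[of x "-x"] d0 by simp
    then show ?thesis by (metis add_eq_0_iff)
  qed
  have dnat: "d (of_nat n * x) = of_nat n * d x" for n x
    by (induction n) (simp_all add: d0 dadd distrib_right)
  have d1: "d 1 = 0" unfolding d_def by simp
  have dint: "d (of_int m) = 0" for m
  proof (cases m rule: int_cases)
    case (nonneg n) then show ?thesis using dnat[of n 1] d1 by simp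
  next
    case (neg n) then show ?thesis using dnat[of "Suc n" 1] d1 dneg[of "of_nat (Suc n)"]
      by (simp del: of_nat_Suc)
  qed
  have drat: "d r = 0" if "r \<in> \<rat>" for r
  proof -
    obtain a b where ab: "b > 0" "r = of_int a / of_int b" by (rule Rats_cases'[OF \<open>r \<in> \<rat>\<close>]) blast
    have "of_nat (nat b) * r = of_int a" using ab by simp
    then have "of_nat (nat b) * d r = 0" using dnat[of "nat b" r] dint[of a] by simp
    then show ?thesis using ab by simp
  qed
  have contd: "continuous_on UNIV d" unfolding d_def by (intro continuous_intros cont)
  have "d x = 0"
    by (rule continuous_constant_on_closure[of "\<rat>" d 0 x]) (use contd drat Rats_closure_real in auto)
  then show ?thesis unfolding d_def by simp
qed

lemma cont_char:
  fixes \<phi> :: "real \<Rightarrow> complex"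
  assumes cont: "continuous_on UNIV \<phi>" and hom: "\<And>s t. \<phi> (s + t) = \<phi> s * \<phi> t"
    and nrm: "\<And>s. cmod (\<phi> s) = 1"
  shows "\<exists>c. \<forall>s. \<phi> s = cis (s * c)"
proof -
  have nz: "\<phi> s \<noteq> 0" for s using nrm[of s] by auto
  obtain g where contg: "continuous_on UNIV g" and eg: "\<And>x. \<phi> x = exp (g x)"
    by (rule continuous_logarithm_on_contractible[OF cont contractible_UNIV]) (use nz in auto)
  have gadd: "g (s + t) = g s + g t - g 0" for s t
  proof -
    define D where "D s = g (s + t) - g s - g t" for s
    have ex: "\<exists>n::int. D s = \<i> * of_real (2 * of_int n * pi)" for s
    proof -
      have "exp (D s) = \<phi> (s + t) / (\<phi> s * \<phi> t)"
        unfolding D_def eg by (simp add: exp_diff)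
      also have "\<dots> = 1" using hom[of s t] nz by simp
      finally obtain n :: int where "Re (D s) = 0" "Im (D s) = of_int (2 * n) * pi"
        using exp_eq_1 by blast
      then have "D s = \<i> * of_real (2 * of_int n * pi)"
        by (simp add: complex_eq_iff)
      then show ?thesis by blast
    qed
    have "D constant_on UNIV"
    proof (rule continuous_discrete_range_constant)
      show "connected (UNIV :: real set)" by simp
      show "continuous_on UNIV D" unfolding D_def
        by (intro continuous_intros continuous_on_compose2[OF contg] contg) auto
      show "\<exists>e>0. \<forall>y. y \<in> UNIV \<and> D y \<noteq> D x \<longrightarrow> e \<le> norm (D y - D x)" for x
      proof (intro exI conjI allI impI)
        show "(2 * pi) > 0" by simp
        fix y assume y: "y \<in> UNIV \<and> D y \<noteq> D x"
        obtain n m :: int where n: "D y = \<i> * of_real (2 * of_int n * pi)"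
          and m: "D x = \<i> * of_real (2 * of_int m * pi)" using ex by metis
        have "n \<noteq> m" using y n m by auto
        then have "1 \<le> \<bar>of_int n - of_int m :: real\<bar>" by linarith
        then have "2 * pi * 1 \<le> 2 * pi * \<bar>of_int n - of_int m :: real\<bar>"
          by (intro mult_left_mono) auto
        moreover have "norm (D y - D x) = 2 * pi * \<bar>of_int n - of_int m :: real\<bar>"
        proof -
          have "D y - D x = \<i> * of_real (2 * pi * (of_int n - of_int m))"
            unfolding n m by (simp add: algebra_simps)
          then have "norm (D y - D x) = norm \<i> * norm (of_real (2 * pi * (of_int n - of_int m)) :: complex)"
            by (simp only: norm_mult)
          also have "\<dots> = \<bar>2 * pi * (of_int n - of_int m)\<bar>" by (simp only: norm_ii norm_of_real mult_1_left)
          finally show ?thesis by (simp add: abs_mult)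
        qed
        ultimately show "2 * pi \<le> norm (D y - D x)" by simp
      qed
    qed
    then have "D s = D 0" by (simp add: constant_on_def) (metis)
    then show ?thesis unfolding D_def by (simp add: algebra_simps)
  qed
  define k where "k s = g s - g 0" for s
  have kadd: "k (x + y) = k x + k y" for x y unfolding k_def using gadd[of x y] by simp
  have contk: "continuous_on UNIV k" unfolding k_def by (intro continuous_intros contg)
  have keq: "k s = of_real s * k 1" for s by (rule cauchy_additive[OF contk kadd])
  have phi0: "\<phi> 0 = 1" using hom[of 0 0] nz[of 0] by simp
  have phis: "\<phi> s = exp (of_real s * k 1)" for s
  proof -
    have "\<phi> s = exp (g 0 + k s)" unfolding k_def eg by simp
    also have "\<dots> = \<phi> 0 * exp (k s)" by (simp add: exp_add eg)
    finally show ?thesis by (simp only: phi0 keq[of s] mult_1_left)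
  qed
  have "Re (k 1) = 0"
    using nrm[of 1] phis[of 1] by simp
  then have k1: "k 1 = \<i> * of_real (Im (k 1))" by (simp add: complex_eq_iff)
  have "\<phi> s = cis (s * Im (k 1))" for s
  proof -
    have "\<phi> s = exp (of_real s * (\<i> * of_real (Im (k 1))))" using phis[of s] k1 by metis
    then show ?thesis by (simp add: cis_conv_exp mult.commute mult.left_commute)
  qed
  then show ?thesis by blast
qed


lemma torus_one: "1 \<in> torus" by (simp add: torus_def)
lemma torus_mult: "a \<in> torus \<Longrightarrow> b \<in> torus \<Longrightarrow> a * b \<in> torus"
  by (simp add: torus_def norm_mult)
lemma torus_vinv: "a \<in> torus \<Longrightarrow> vinv a \<in> torus"
  by (simp add: torus_def vinv_def norm_inverse)
lemma torus_nz: "a \<in> torus \<Longrightarrow> a $ j \<noteq> 0"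
  by (auto simp: torus_def dest: spec[of _ j])
lemma vinv_mult_self: "a \<in> torus \<Longrightarrow> vinv a * a = 1"
  by (simp add: vinv_def vec_eq_iff torus_nz)
lemma self_mult_vinv: "a \<in> torus \<Longrightarrow> a * vinv a = 1"
  by (simp add: vinv_def vec_eq_iff torus_nz)
lemma vinv_one: "vinv 1 = 1" by (simp add: vinv_def vec_eq_iff)
lemma vinv_vinv: "vinv (vinv a) = a" by (simp add: vinv_def vec_eq_iff)
lemma vinv_mult: "vinv (a * b) = vinv a * vinv b" by (simp add: vinv_def vec_eq_iff)

lemma polyP_mult: "polyP \<xi> (a * b) = polyP \<xi> a * polyP \<xi> b"
  by (simp add: polyP_def power_mult_distrib prod.distrib)

lemma expT_add: "expT (X + Y) = expT X * expT Y"
  by (simp add: expT_def vec_eq_iff cis_mult)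
lemma expT_zero: "expT 0 = 1"
  by (simp add: expT_def vec_eq_iff)
lemma expT_torus: "expT X \<in> torus"
  by (simp add: expT_def torus_def)

lemma cont_expT_line: "continuous_on UNIV (\<lambda>s::real. expT (s *\<^sub>R X))"
  unfolding expT_def
  by (intro continuous_on_vec_lambda continuous_intros continuous_on_compose2[OF continuous_on_cis]) auto

locale LM =
  fixes H :: "(complex^'n) set" and \<rho> :: "complex^'n \<Rightarrow> complex^'m" and B :: "real^'n^'n"
    and \<xi> :: "'m \<Rightarrow> nat" and \<iota> :: "'k::finite \<Rightarrow> 'm"
  assumes H: "closed_subgroup H"
    and dimm: "CARD('m) = dim (lie_alg H) + 1"
    and \<rho>_hom: "\<forall>a\<in>H. \<forall>b\<in>H. \<rho> (a * b) = \<rho> a * \<rho> b"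
    and \<rho>_cont: "continuous_on H \<rho>"
    and \<rho>_inj: "inj_on \<rho> H"
    and \<rho>_torus: "\<rho> ` H \<subseteq> torus"
    and B_sym: "transpose B = B"
    and B_pos: "\<forall>x. x \<noteq> 0 \<longrightarrow> x \<bullet> (B *v x) > 0"
    and exs: "exact_seq H \<rho> \<xi>"
    and \<iota>_inj: "inj \<iota>"
    and \<xi>_supp: "\<forall>i. i \<notin> range \<iota> \<longrightarrow> \<xi> i = 0"
begin

lemma H_torus: "h \<in> H \<Longrightarrow> h \<in> torus" using H by (auto simp: closed_subgroup_def)
lemma H_one: "1 \<in> H" using H by (auto simp: closed_subgroup_def)
lemma H_mult: "a \<in> H \<Longrightarrow> b \<in> H \<Longrightarrow> a * b \<in> H" using H by (auto simp: closed_subgroup_def)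
lemma H_vinv: "a \<in> H \<Longrightarrow> vinv a \<in> H" using H by (auto simp: closed_subgroup_def)

lemma rho_torus: "h \<in> H \<Longrightarrow> \<rho> h \<in> torus" using \<rho>_torus by auto

lemma rho_one: "\<rho> 1 = 1"
proof -
  have "\<rho> (1 * 1) = \<rho> 1 * \<rho> 1" using \<rho>_hom H_one by blast
  then have "\<rho> 1 = \<rho> 1 * \<rho> 1" by simp
  then have "\<rho> 1 $ j = 1" for j
    using torus_nz[OF rho_torus[OF H_one], of j] by (auto simp: vec_eq_iff dest: spec[of _ j])
  then show ?thesis by (simp add: vec_eq_iff)
qed

lemma rho_vinv: assumes "h \<in> H" shows "\<rho> (vinv h) * \<rho> h = 1"
proof -
  have "\<rho> (vinv h * h) = \<rho> (vinv h) * \<rho> h" using \<rho>_hom H_vinv assms by blast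
  then show ?thesis using vinv_mult_self[OF H_torus[OF assms]] rho_one by simp
qed

lemma polyP_rho: assumes "h \<in> H" shows "polyP \<xi> (\<rho> h) = 1"
proof -
  have "\<rho> h \<in> \<rho> ` H" using assms by simp
  then have "\<rho> h \<in> {l \<in> torus. polyP \<xi> l = 1}" using exs unfolding exact_seq_def by simp
  then show ?thesis by simp
qed

lemma rho_surj: assumes "l \<in> torus" "polyP \<xi> l = 1" shows "\<exists>h\<in>H. \<rho> h = l"
proof -
  have "l \<in> {l \<in> torus. polyP \<xi> l = 1}" using assms by simp
  then have "l \<in> \<rho> ` H" using exs unfolding exact_seq_def by simp
  then show ?thesis by auto
qed

lemma xi_nonzero: "\<exists>i. \<xi> i \<noteq> 0"
proof (rule ccontr)
  assume "\<not> ?thesis"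
  then have "polyP \<xi> l = 1" for l by (simp add: polyP_def)
  moreover have "(-1::complex) \<in> polyP \<xi> ` torus" using exs by (simp add: exact_seq_def)
  ultimately show False by auto
qed

end


context LM begin

abbreviation "hh \<equiv> lie_alg H"

lemma lie_zero: "0 \<in> hh"
  by (simp add: lie_alg_def expT_zero H_one)

lemma lie_add: "X \<in> hh \<Longrightarrow> Y \<in> hh \<Longrightarrow> X + Y \<in> hh"
  unfolding lie_alg_def by (simp add: scaleR_add_right expT_add H_mult)

lemma lie_scale: "X \<in> hh \<Longrightarrow> c *\<^sub>R X \<in> hh"
  unfolding lie_alg_def by (simp add: scaleR_scaleR)

lemma subspace_lie: "subspace hh"
  unfolding subspace_def using lie_zero lie_add lie_scale by blast

lemma expT_line_H: "X \<in> hh \<Longrightarrow> expT (s *\<^sub>R X) \<in> H"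
  by (simp add: lie_alg_def)

lemma eta_ex: assumes X: "X \<in> hh" shows "\<exists>c. \<forall>s. \<rho> (expT (s *\<^sub>R X)) $ i = cis (s * c)"
proof (rule cont_char)
  have "continuous_on UNIV (\<lambda>s. \<rho> (expT (s *\<^sub>R X)))"
    by (rule continuous_on_compose2[OF \<rho>_cont cont_expT_line]) (use X expT_line_H in auto)
  then show "continuous_on UNIV (\<lambda>s. \<rho> (expT (s *\<^sub>R X)) $ i)"
    by (intro continuous_intros)
  show "\<rho> (expT ((s + t) *\<^sub>R X)) $ i = \<rho> (expT (s *\<^sub>R X)) $ i * \<rho> (expT (t *\<^sub>R X)) $ i" for s t
    using \<rho>_hom expT_line_H[OF X] by (simp add: scaleR_add_left expT_add)
  show "cmod (\<rho> (expT (s *\<^sub>R X)) $ i) = 1" for s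
    using rho_torus[OF expT_line_H[OF X]] by (simp add: torus_def)
qed

lemma eta_char: assumes X: "X \<in> hh" shows "\<rho> (expT (s *\<^sub>R X)) $ i = cis (s * eta \<rho> i X)"
proof -
  obtain c where c: "\<forall>s. \<rho> (expT (s *\<^sub>R X)) $ i = cis (s * c)" using eta_ex[OF X] by blast
  have "eta \<rho> i X = c"
    unfolding eta_def
  proof (rule the_equality)
    show "\<forall>s. \<rho> (expT (s *\<^sub>R X)) $ i = cis (s * c)" by fact
    show "\<And>d. \<forall>s. \<rho> (expT (s *\<^sub>R X)) $ i = cis (s * d) \<Longrightarrow> d = c"
      using c by (intro cis_all_eq) simp
  qed
  then show ?thesis using c by simp
qed

lemma eta_unique: assumes X: "X \<in> hh" and c: "\<forall>s. \<rho> (expT (s *\<^sub>R X)) $ i = cis (s * c)"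
  shows "eta \<rho> i X = c"
  using eta_char[OF X] c by (intro cis_all_eq) simp

lemma eta_add: assumes "X \<in> hh" "Y \<in> hh" shows "eta \<rho> i (X + Y) = eta \<rho> i X + eta \<rho> i Y"
proof (rule eta_unique[OF lie_add[OF assms]], rule allI)
  fix s
  have "\<rho> (expT (s *\<^sub>R (X + Y))) = \<rho> (expT (s *\<^sub>R X)) * \<rho> (expT (s *\<^sub>R Y))"
    using \<rho>_hom expT_line_H assms by (simp add: scaleR_add_right expT_add)
  then show "\<rho> (expT (s *\<^sub>R (X + Y))) $ i = cis (s * (eta \<rho> i X + eta \<rho> i Y))"
    using eta_char assms by (simp add: cis_mult distrib_left)
qed

lemma eta_scale: assumes "X \<in> hh" shows "eta \<rho> i (c *\<^sub>R X) = c * eta \<rho> i X"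
proof (rule eta_unique[OF lie_scale[OF assms]], rule allI)
  fix s
  show "\<rho> (expT (s *\<^sub>R (c *\<^sub>R X))) $ i = cis (s * (c * eta \<rho> i X))"
    using eta_char[OF assms, of "s * c" i] by (simp add: mult.assoc)
qed

lemma eta_zero: "eta \<rho> i 0 = 0"
  using eta_scale[OF lie_zero, where c=0] by simp

lemma eta_riesz: "\<exists>u. \<forall>X\<in>hh. u \<bullet> X = eta \<rho> i X"
proof -
  obtain T where T: "0 \<notin> T" "T \<subseteq> hh" "pairwise orthogonal T" "independent T" "span T = hh"
    using orthogonal_basis_subspace[OF subspace_lie] by metis
  have finT: "finite T" using T(4) independent_imp_finite by blast
  define u where "u = (\<Sum>b\<in>T. (eta \<rho> i b / (b \<bullet> b)) *\<^sub>R b)"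
  have ub: "u \<bullet> b = eta \<rho> i b" if b: "b \<in> T" for b
  proof -
    have "u \<bullet> b = (\<Sum>b'\<in>T. (eta \<rho> i b' / (b' \<bullet> b')) * (b' \<bullet> b))"
      unfolding u_def by (simp add: inner_sum_left)
    also have "\<dots> = (eta \<rho> i b / (b \<bullet> b)) * (b \<bullet> b)"
      by (rule sum.remove[OF finT b, THEN trans]) (use T(3) b in \<open>auto simp: pairwise_def orthogonal_def intro!: sum.neutral\<close>)
    also have "\<dots> = eta \<rho> i b" using T(1) b by auto
    finally show ?thesis .
  qed
  have "span T \<subseteq> {X. X \<in> hh \<and> u \<bullet> X = eta \<rho> i X}"
  proof (rule span_minimal)
    show "T \<subseteq> {X. X \<in> hh \<and> u \<bullet> X = eta \<rho> i X}" using ub T(2) by auto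
    show "subspace {X. X \<in> hh \<and> u \<bullet> X = eta \<rho> i X}"
      unfolding subspace_def using lie_zero lie_add lie_scale eta_add eta_scale eta_zero
      by (auto simp: inner_add_right)
  qed
  then show ?thesis using T(5) by blast
qed

end


lemma prod_cis: "(\<Prod>i\<in>A. cis (f i)) = cis (\<Sum>i\<in>A. f i)"
  by (induction A rule: infinite_finite_induct) (auto simp: cis_mult)

lemma prod_cis_pow: "(\<Prod>i\<in>A. cis (f i) ^ n i) = cis (\<Sum>i\<in>A. real (n i) * f i)"
  unfolding prod_cis[symmetric] by (rule prod.cong) (simp_all add: Complex.DeMoivre)

context LM begin

lemma B_dot_sym: "(B *v x) \<bullet> y = x \<bullet> (B *v y)"
proof -
  have "B *v x = x v* transpose B" by simp
  then have "B *v x = x v* B" using B_sym by simp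
  then show ?thesis by (simp add: dot_lmul_matrix)
qed

lemma B_lin: "linear (\<lambda>x. B *v x)" by simp

lemma B_kernel: "B *v x = 0 \<Longrightarrow> x = 0"
proof (rule ccontr)
  assume "B *v x = 0" "x \<noteq> 0"
  then show False using B_pos by force
qed

lemma B_inj: "inj (\<lambda>x. B *v x)"
proof (rule injI)
  fix x y assume "B *v x = B *v y"
  then have "B *v (x - y) = 0" by (simp add: matrix_vector_mult_diff_distrib)
  then show "x = y" using B_kernel[of "x - y"] by simp
qed

lemma B_surj: "\<exists>y. B *v y = v"
proof -
  have "surj (\<lambda>x. B *v x)"
    by (rule linear_injective_imp_surjective[OF B_lin B_inj]) simp
  then show ?thesis by (metis surj_def)
qed

lemma vanish_zero:
  assumes h: "\<forall>X\<in>hh. v \<bullet> X = 0" and c: "\<forall>Y. (\<forall>X\<in>hh. X \<bullet> (B *v Y) = 0) \<longrightarrow> v \<bullet> Y = 0"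
  shows "v = 0"
proof -
  obtain y where y: "B *v y = v" using B_surj by blast
  have "\<forall>X\<in>hh. X \<bullet> (B *v y) = 0" using h y by (simp add: inner_commute)
  then have "v \<bullet> y = 0" using c by blast
  then have "y \<bullet> (B *v y) = 0" using y by (simp add: inner_commute)
  then have "y = 0" using B_pos by (metis less_irrefl)
  then show ?thesis using y by simp
qed

lemma etaT_exists:
  "\<exists>v. (\<forall>X\<in>hh. v \<bullet> X = eta \<rho> i X) \<and> (\<forall>Y. (\<forall>X\<in>hh. X \<bullet> (B *v Y) = 0) \<longrightarrow> v \<bullet> Y = 0)"
proof -
  obtain u where u: "\<forall>X\<in>hh. u \<bullet> X = eta \<rho> i X" using eta_riesz by blast
  define S where "S = (\<lambda>w. B *v w) ` hh"
  define T where "T = {y. \<forall>x\<in>hh. orthogonal x y}"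
  have subS: "subspace S" unfolding S_def
    by (rule linear_subspace_image[OF B_lin subspace_lie])
  have subT: "subspace T" unfolding T_def by (rule subspace_orthogonal_to_vectors)
  have dimS: "dim S = dim hh" unfolding S_def
    by (rule dim_image_eq[OF B_lin]) (use B_inj in \<open>auto simp: inj_on_def inj_def\<close>)
  have dimT: "dim T + dim hh = dim (UNIV :: (real^'n) set)"
    unfolding T_def using dim_subspace_orthogonal_to_vectors[OF subspace_lie subspace_UNIV] by simp
  have ST: "S \<inter> T \<subseteq> {0}"
  proof
    fix z assume z: "z \<in> S \<inter> T"
    then obtain w where w: "w \<in> hh" "z = B *v w" unfolding S_def by auto
    then have "orthogonal w z" using z unfolding T_def by auto
    then have "w \<bullet> (B *v w) = 0" using w by (simp add: orthogonal_def)
    then have "w = 0" using B_pos by (metis less_irrefl)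
    then show "z \<in> {0}" using w by simp
  qed
  then have d0: "dim (S \<inter> T) = 0" by simp
  have "dim {x + y |x y. x \<in> S \<and> y \<in> T} = dim (UNIV :: (real^'n) set)"
    using dim_sums_Int[OF subS subT] dimS dimT d0 by linarith
  then have "span {x + y |x y. x \<in> S \<and> y \<in> T} = UNIV"
    using dim_eq_full[of "{x + y |x y. x \<in> S \<and> y \<in> T}"] by simp
  then have "{x + y |x y. x \<in> S \<and> y \<in> T} = UNIV"
    using span_eq_iff[of "{x + y |x y. x \<in> S \<and> y \<in> T}"] subspace_sums[OF subS subT] by simp
  then obtain s r where sr: "s \<in> S" "r \<in> T" "u = s + r" by blast
  then obtain w where w: "w \<in> hh" "s = B *v w" unfolding S_def by auto
  show ?thesis
  proof (intro exI conjI ballI allI impI)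
    fix X assume X: "X \<in> hh"
    have "r \<bullet> X = 0" using sr(2) X unfolding T_def by (simp add: orthogonal_def inner_commute)
    moreover have "u \<bullet> X = eta \<rho> i X" using u X by blast
    ultimately show "(B *v w) \<bullet> X = eta \<rho> i X" using sr(3) w by (simp add: inner_add_left)
  next
    fix Y assume "\<forall>X\<in>hh. X \<bullet> (B *v Y) = 0"
    then show "(B *v w) \<bullet> Y = 0" using w by (simp add: B_dot_sym)
  qed
qed

lemma etaT_char:
  "(\<forall>X\<in>hh. etaT B H \<rho> i \<bullet> X = eta \<rho> i X) \<and>
   (\<forall>Y. (\<forall>X\<in>hh. X \<bullet> (B *v Y) = 0) \<longrightarrow> etaT B H \<rho> i \<bullet> Y = 0)"
  unfolding etaT_def
proof (rule theI')
  show "\<exists>!v. (\<forall>X\<in>hh. v \<bullet> X = eta \<rho> i X) \<and> (\<forall>Y. (\<forall>X\<in>hh. X \<bullet> (B *v Y) = 0) \<longrightarrow> v \<bullet> Y = 0)"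
  proof (rule ex_ex1I[OF etaT_exists])
    fix v1 v2
    assume 1: "(\<forall>X\<in>hh. v1 \<bullet> X = eta \<rho> i X) \<and> (\<forall>Y. (\<forall>X\<in>hh. X \<bullet> (B *v Y) = 0) \<longrightarrow> v1 \<bullet> Y = 0)"
       and 2: "(\<forall>X\<in>hh. v2 \<bullet> X = eta \<rho> i X) \<and> (\<forall>Y. (\<forall>X\<in>hh. X \<bullet> (B *v Y) = 0) \<longrightarrow> v2 \<bullet> Y = 0)"
    have "v1 - v2 = 0"
      by (rule vanish_zero) (use 1 2 in \<open>auto simp: inner_diff_left\<close>)
    then show "v1 = v2" by simp
  qed
qed

lemma etaT_h: "X \<in> hh \<Longrightarrow> etaT B H \<rho> i \<bullet> X = eta \<rho> i X"
  using etaT_char by blast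

lemma etaT_C: "(\<forall>X\<in>hh. X \<bullet> (B *v Y) = 0) \<Longrightarrow> etaT B H \<rho> i \<bullet> Y = 0"
  using etaT_char by blast

lemma xi_eta: assumes X: "X \<in> hh" shows "(\<Sum>i\<in>UNIV. real (\<xi> i) * eta \<rho> i X) = 0"
proof -
  have "cis (s * (\<Sum>i\<in>UNIV. real (\<xi> i) * eta \<rho> i X)) = 1" for s
  proof -
    have "1 = polyP \<xi> (\<rho> (expT (s *\<^sub>R X)))" using polyP_rho expT_line_H[OF X] by simp
    also have "\<dots> = (\<Prod>i\<in>UNIV. cis (s * eta \<rho> i X) ^ \<xi> i)"
      unfolding polyP_def using eta_char[OF X] by simp
    also have "\<dots> = cis (\<Sum>i\<in>UNIV. real (\<xi> i) * (s * eta \<rho> i X))" by (rule prod_cis_pow)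
    finally show ?thesis by (simp add: sum_distrib_left algebra_simps)
  qed
  then show ?thesis using cis_all_one by blast
qed

definition "wsum = (\<Sum>i\<in>UNIV. real (\<xi> i) *\<^sub>R etaT B H \<rho> i)"

lemma wsum_zero: "wsum = 0"
proof (rule vanish_zero)
  show "\<forall>X\<in>hh. wsum \<bullet> X = 0"
    using xi_eta etaT_h by (simp add: wsum_def inner_sum_left)
  show "\<forall>Y. (\<forall>X\<in>hh. X \<bullet> (B *v Y) = 0) \<longrightarrow> wsum \<bullet> Y = 0"
    using etaT_C by (simp add: wsum_def inner_sum_left)
qed

end


lemma inner_vec_real: "(x::real^'m) \<bullet> y = (\<Sum>i\<in>UNIV. x$i * y$i)"
  by (simp add: inner_vec_def)

context LM begin

definition "xiv = (\<chi> i. real (\<xi> i))"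

lemma xiv_nz: "xiv \<noteq> 0"
  using xi_nonzero by (auto simp: xiv_def vec_eq_iff)

definition "EE X = (\<chi> i. etaT B H \<rho> i \<bullet> X)"

lemma EE_lin: "linear EE"
  by (rule linearI) (simp_all add: EE_def vec_eq_iff inner_add_right)

lemma EE_kernel: assumes X: "X \<in> hh" and E0: "EE X = 0" shows "X = 0"
proof -
  have e0: "eta \<rho> i X = 0" for i
    using E0 etaT_h[OF X, of i] by (simp add: EE_def vec_eq_iff)
  have "\<rho> (expT (s *\<^sub>R X)) = \<rho> 1" for s
    using eta_char[OF X] e0 rho_one by (simp add: vec_eq_iff)
  then have "expT (s *\<^sub>R X) = 1" for s
    using inj_onD[OF \<rho>_inj] expT_line_H[OF X] H_one by blast
  then have "cis (s * X $ j) = 1" for s j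
    by (simp add: expT_def vec_eq_iff)
  then have "X $ j = 0" for j using cis_all_one by blast
  then show ?thesis by (simp add: vec_eq_iff)
qed

lemma span_hh: "span hh = hh"
  using span_eq_iff subspace_lie by blast

lemma EE_inj: "inj_on EE (span hh)"
proof (rule inj_onI)
  fix x y assume xy: "x \<in> span hh" "y \<in> span hh" "EE x = EE y"
  have "x - y \<in> hh" using xy span_hh subspace_diff[OF subspace_lie] by auto
  moreover have "EE (x - y) = 0" using xy linear_diff[OF EE_lin] by simp
  ultimately show "x = y" using EE_kernel by fastforce
qed

lemma kernel_xi:
  assumes c: "\<forall>X\<in>hh. (\<Sum>i\<in>UNIV. c$i * eta \<rho> i X) = 0"
  shows "\<exists>a. c = a *\<^sub>R xiv"
proof -
  define Oo where "Oo = {y. \<forall>x\<in>EE ` hh. orthogonal x y}"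
  have subE: "subspace (EE ` hh)" by (rule linear_subspace_image[OF EE_lin subspace_lie])
  have dimE: "dim (EE ` hh) = dim hh" by (rule dim_image_eq[OF EE_lin EE_inj])
  have "dim Oo + dim (EE ` hh) = dim (UNIV :: (real^'m) set)"
    unfolding Oo_def using dim_subspace_orthogonal_to_vectors[OF subE subspace_UNIV] by simp
  then have dimO: "dim Oo = 1" using dimE dimm by simp
  have subO: "subspace Oo" unfolding Oo_def by (rule subspace_orthogonal_to_vectors)
  have inO: "v \<in> Oo" if v: "\<forall>X\<in>hh. (\<Sum>i\<in>UNIV. v$i * eta \<rho> i X) = 0" for v
    unfolding Oo_def
  proof (intro CollectI ballI)
    fix x assume "x \<in> EE ` hh"
    then obtain X where X: "X \<in> hh" "x = EE X" by auto
    have "x \<bullet> v = (\<Sum>i\<in>UNIV. v$i * eta \<rho> i X)"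
      unfolding X(2) inner_vec_real[of "EE X" v] by (simp add: EE_def etaT_h[OF X(1)] mult.commute)
    then show "orthogonal x v" using v X by (simp add: orthogonal_def)
  qed
  have cO: "c \<in> Oo" using inO c by blast
  have xO: "xiv \<in> Oo" using inO xi_eta by (simp add: xiv_def)
  have "span {xiv} = Oo"
  proof (rule subspace_dim_equal)
    show "subspace (span {xiv})" by simp
    show "subspace Oo" by fact
    show "span {xiv} \<subseteq> Oo" using xO subO by (simp add: span_minimal)
    show "dim Oo \<le> dim (span {xiv})" using dimO xiv_nz by simp
  qed
  then have "c \<in> span {xiv}" using cO by simp
  then show ?thesis by (auto simp: span_singleton)
qed

definition "xiprop z \<longleftrightarrow> (\<exists>a. \<forall>i. (cmod (z$i))\<^sup>2 = a * real (\<xi> i))"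

lemma ZY_iff: "(t, \<alpha>, z) \<in> ZY B H \<rho> \<longleftrightarrow> t \<in> torus \<and> \<alpha> = 0 \<and> xiprop z"
proof
  assume Z: "(t, \<alpha>, z) \<in> ZY B H \<rho>"
  then have t: "t \<in> torus" and al: "\<alpha> \<in> annih H"
    and P: "\<alpha> + (1/2) *\<^sub>R (\<Sum>i\<in>UNIV. (cmod (z $ i))\<^sup>2 *\<^sub>R etaT B H \<rho> i) = 0"
    by (auto simp: ZY_def MY_def PhiY_def)
  define c where "c = (\<chi> i. (cmod (z $ i))\<^sup>2)"
  have "\<forall>X\<in>hh. (\<Sum>i\<in>UNIV. c$i * eta \<rho> i X) = 0"
  proof
    fix X assume X: "X \<in> hh"
    have "(\<alpha> + (1/2) *\<^sub>R (\<Sum>i\<in>UNIV. (cmod (z $ i))\<^sup>2 *\<^sub>R etaT B H \<rho> i)) \<bullet> X = 0"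
      using P by simp
    moreover have "\<alpha> \<bullet> X = 0" using al X by (simp add: annih_def)
    ultimately have "(\<Sum>i\<in>UNIV. (cmod (z $ i))\<^sup>2 * (etaT B H \<rho> i \<bullet> X)) = 0"
      by (simp add: inner_add_left inner_sum_left)
    then show "(\<Sum>i\<in>UNIV. c$i * eta \<rho> i X) = 0" using etaT_h[OF X] by (simp add: c_def)
  qed
  then obtain a where a: "c = a *\<^sub>R xiv" using kernel_xi by blast
  then have za: "(cmod (z$i))\<^sup>2 = a * real (\<xi> i)" for i
    by (simp add: c_def xiv_def vec_eq_iff)
  have "(\<Sum>i\<in>UNIV. (cmod (z $ i))\<^sup>2 *\<^sub>R etaT B H \<rho> i) = a *\<^sub>R wsum"
    by (simp add: za wsum_def scaleR_sum_right)
  then have "\<alpha> = 0" using P wsum_zero by simp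
  then show "t \<in> torus \<and> \<alpha> = 0 \<and> xiprop z" using t za by (auto simp: xiprop_def)
next
  assume "t \<in> torus \<and> \<alpha> = 0 \<and> xiprop z"
  then obtain a where t: "t \<in> torus" and al: "\<alpha> = 0" and za: "\<And>i. (cmod (z$i))\<^sup>2 = a * real (\<xi> i)"
    by (auto simp: xiprop_def)
  have "(\<Sum>i\<in>UNIV. (cmod (z $ i))\<^sup>2 *\<^sub>R etaT B H \<rho> i) = a *\<^sub>R wsum"
    by (simp add: za wsum_def scaleR_sum_right)
  then show "(t, \<alpha>, z) \<in> ZY B H \<rho>"
    using t al wsum_zero by (simp add: ZY_def MY_def PhiY_def annih_def)
qed

end

lemma expT_Kgrp: "expT X \<in> Kgrp \<iota> \<xi> \<longleftrightarrow> cis (\<Sum>j\<in>UNIV. real (\<xi> (\<iota> j)) * X$j) = 1"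
  using expT_torus[of X] by (simp add: Kgrp_def prod_cis_pow expT_def)

lemma lie_alg_K: "X \<in> lie_alg (Kgrp \<iota> \<xi>) \<longleftrightarrow> (\<Sum>j\<in>UNIV. real (\<xi> (\<iota> j)) * X$j) = 0"
proof -
  have "X \<in> lie_alg (Kgrp \<iota> \<xi>) \<longleftrightarrow> (\<forall>s. cis (s * (\<Sum>j\<in>UNIV. real (\<xi> (\<iota> j)) * X$j)) = 1)"
    by (simp add: lie_alg_def expT_Kgrp sum_distrib_left algebra_simps)
  also have "\<dots> \<longleftrightarrow> (\<Sum>j\<in>UNIV. real (\<xi> (\<iota> j)) * X$j) = 0"
    using cis_all_one by auto
  finally show ?thesis .
qed

lemma ZK_iff: "z \<in> ZK (Kgrp \<iota> \<xi>) \<longleftrightarrow> (\<exists>a. \<forall>j. (cmod (z$j))\<^sup>2 = a * real (\<xi> (\<iota> j)))"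
proof
  assume "\<exists>a. \<forall>j. (cmod (z$j))\<^sup>2 = a * real (\<xi> (\<iota> j))"
  then obtain a where a: "\<And>j. (cmod (z$j))\<^sup>2 = a * real (\<xi> (\<iota> j))" by blast
  show "z \<in> ZK (Kgrp \<iota> \<xi>)"
    unfolding ZK_def muK_def
  proof (intro CollectI ballI)
    fix X :: "real^'a" assume "X \<in> lie_alg (Kgrp \<iota> \<xi>)"
    then have "(\<Sum>j\<in>UNIV. real (\<xi> (\<iota> j)) * X$j) = 0" by (simp add: lie_alg_K)
    have "(\<Sum>j\<in>UNIV. X $ j * (cmod (z $ j))\<^sup>2) = a * (\<Sum>j\<in>UNIV. real (\<xi> (\<iota> j)) * X$j)"
      by (simp add: a sum_distrib_left mult_ac)
    then show "1 / 2 * (\<Sum>j\<in>UNIV. X $ j * (cmod (z $ j))\<^sup>2) = 0"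
      using \<open>(\<Sum>j\<in>UNIV. real (\<xi> (\<iota> j)) * X$j) = 0\<close> by simp
  qed
next
  assume z: "z \<in> ZK (Kgrp \<iota> \<xi>)"
  define w where "w = (\<chi> j. (cmod (z$j))\<^sup>2)"
  define e where "e = (\<chi> j. real (\<xi> (\<iota> j)))"
  have we: "w \<bullet> X = 0" if "e \<bullet> X = 0" for X
  proof -
    have "X \<in> lie_alg (Kgrp \<iota> \<xi>)" using that by (simp add: lie_alg_K e_def inner_vec_real)
    then have "muK z X = 0" using z by (simp add: ZK_def)
    then show ?thesis by (simp add: muK_def w_def inner_vec_real mult.commute)
  qed
  obtain y r where yr: "y \<in> span {e}" "\<And>v. v \<in> span {e} \<Longrightarrow> orthogonal r v" "w = y + r"
    using orthogonal_subspace_decomp_exists[of "{e}" w] by metis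
  obtain k where k: "y = k *\<^sub>R e" using yr(1) by (auto simp: span_singleton)
  have re: "e \<bullet> r = 0" using yr(2)[of e] by (simp add: span_base orthogonal_def inner_commute)
  then have "w \<bullet> r = 0" using we by blast
  moreover have "w \<bullet> r = r \<bullet> r" using re k yr(3) by (simp add: inner_add_left)
  ultimately have "r = 0" by simp
  then have "w = k *\<^sub>R e" using yr(3) k by simp
  then show "\<exists>a. \<forall>j. (cmod (z$j))\<^sup>2 = a * real (\<xi> (\<iota> j))"
    by (auto simp: w_def e_def vec_eq_iff)
qed


lemma sat_orb:
  assumes refl: "\<And>x. x \<in> orb G x" and st: "\<And>x y. y \<in> orb G x \<Longrightarrow> orb G y = orb G x"
    and U: "U \<subseteq> rpts G Z"
  shows "x \<in> \<Union>U \<longleftrightarrow> orb G x \<in> U"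
proof
  assume "x \<in> \<Union>U"
  then obtain o' where o: "o' \<in> U" "x \<in> o'" by blast
  then obtain y where "o' = orb G y" using U by (auto simp: rpts_def)
  then show "orb G x \<in> U" using o st by metis
next
  assume "orb G x \<in> U" then show "x \<in> \<Union>U" using refl by blast
qed

context LM begin

abbreviation "K \<equiv> Kgrp \<iota> \<xi>"
abbreviation "GG \<equiv> GY H \<rho>"
abbreviation "ZZ \<equiv> ZY B H \<rho>"

definition "inclv z = (\<chi> i. if i \<in> range \<iota> then z $ (inv \<iota> i) else 0)"
definition "projv (z :: complex^'m) = (\<chi> j. z $ (\<iota> j))"

lemma inclY_eq: "inclY \<iota> z = (1, 0, inclv z)"
  by (simp add: inclY_def inclv_def)

lemma proj_incl: "projv (inclv z) = z"
  by (simp add: projv_def inclv_def vec_eq_iff inv_f_f[OF \<iota>_inj])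

lemma incl_proj: assumes "xiprop z" shows "inclv (projv z) = z"
proof -
  obtain a where a: "\<And>i. (cmod (z$i))\<^sup>2 = a * real (\<xi> i)" using assms by (auto simp: xiprop_def)
  have "z $ i = 0" if "i \<notin> range \<iota>" for i using a[of i] \<xi>_supp that by simp
  then show ?thesis by (auto simp: projv_def inclv_def vec_eq_iff f_inv_into_f)
qed

lemma xiprop_incl: "xiprop (inclv z) \<longleftrightarrow> z \<in> ZK K"
proof
  assume "xiprop (inclv z)"
  then obtain a where a: "\<And>i. (cmod (inclv z $ i))\<^sup>2 = a * real (\<xi> i)" by (auto simp: xiprop_def)
  have "(cmod (z$j))\<^sup>2 = a * real (\<xi> (\<iota> j))" for j
    using a[of "\<iota> j"] by (simp add: inclv_def inv_f_f[OF \<iota>_inj])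
  then show "z \<in> ZK K" by (auto simp: ZK_iff)
next
  assume "z \<in> ZK K"
  then obtain a where a: "\<And>j. (cmod (z$j))\<^sup>2 = a * real (\<xi> (\<iota> j))" by (auto simp: ZK_iff)
  have "(cmod (inclv z $ i))\<^sup>2 = a * real (\<xi> i)" for i
  proof (cases "i \<in> range \<iota>")
    case True
    then obtain j where "i = \<iota> j" by auto
    then show ?thesis using a[of j] by (simp add: inclv_def inv_f_f[OF \<iota>_inj])
  next
    case False then show ?thesis using \<xi>_supp by (simp add: inclv_def)
  qed
  then show "xiprop (inclv z)" by (auto simp: xiprop_def)
qed

lemma xiprop_proj: assumes "xiprop z" shows "projv z \<in> ZK K"
  using xiprop_incl incl_proj[OF assms] assms by metis

lemma incl_ZY: "z \<in> ZK K \<Longrightarrow> inclY \<iota> z \<in> ZZ"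
  by (simp add: inclY_eq ZY_iff torus_one xiprop_incl)

lemma orbY: "q \<in> orb GG (t, \<alpha>, z) \<longleftrightarrow> (\<exists>s h. s \<in> torus \<and> h \<in> H \<and> q = (s * h * t, \<alpha>, \<rho> (vinv h) * z))"
proof
  assume "q \<in> orb GG (t, \<alpha>, z)"
  then show "\<exists>s h. s \<in> torus \<and> h \<in> H \<and> q = (s * h * t, \<alpha>, \<rho> (vinv h) * z)"
    unfolding orb_def GY_def by auto
next
  assume "\<exists>s h. s \<in> torus \<and> h \<in> H \<and> q = (s * h * t, \<alpha>, \<rho> (vinv h) * z)"
  then obtain s h where sh: "s \<in> torus" "h \<in> H" "q = (s * h * t, \<alpha>, \<rho> (vinv h) * z)" by blast
  let ?g = "\<lambda>(t::complex^'n, \<alpha>::real^'n, z::complex^'m). (s * h * t, \<alpha>, \<rho> (vinv h) * z)"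
  have "?g \<in> GG" unfolding GY_def using sh by blast
  moreover have "q = ?g (t, \<alpha>, z)" using sh by simp
  ultimately show "q \<in> orb GG (t, \<alpha>, z)" unfolding orb_def by blast
qed

lemma orbY_refl: "p \<in> orb GG p"
proof -
  obtain t \<alpha> z where p: "p = (t, \<alpha>, z)" by (cases p) auto
  show ?thesis unfolding p orbY
    by (rule exI[of _ 1], rule exI[of _ 1]) (simp add: torus_one H_one vinv_one rho_one)
qed

lemma orbY_sym: assumes "q \<in> orb GG p" shows "p \<in> orb GG q"
proof -
  obtain t \<alpha> z where p: "p = (t, \<alpha>, z)" by (cases p) auto
  obtain s h where sh: "s \<in> torus" "h \<in> H" "q = (s * h * t, \<alpha>, \<rho> (vinv h) * z)"
    using assms unfolding p orbY by blast
  have ht: "h \<in> torus" using H_torus sh(2) by blast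
  have 1: "vinv s * vinv h * (s * h * t) = t"
  proof -
    have "vinv s * vinv h * (s * h * t) = (vinv s * s) * (vinv h * h) * t" by (simp add: mult_ac)
    then show ?thesis using vinv_mult_self[OF sh(1)] vinv_mult_self[OF ht] by simp
  qed
  have 2: "\<rho> (vinv (vinv h)) * (\<rho> (vinv h) * z) = z"
    using rho_vinv[OF sh(2)] by (simp add: vinv_vinv mult_ac)
  show ?thesis unfolding sh(3) orbY p
    by (rule exI[of _ "vinv s"], rule exI[of _ "vinv h"]) (simp add: 1 2 torus_vinv sh H_vinv)
qed

lemma orbY_trans: assumes "q \<in> orb GG p" "r \<in> orb GG q" shows "r \<in> orb GG p"
proof -
  obtain t \<alpha> z where p: "p = (t, \<alpha>, z)" by (cases p) auto
  obtain s h where sh: "s \<in> torus" "h \<in> H" "q = (s * h * t, \<alpha>, \<rho> (vinv h) * z)"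
    using assms(1) unfolding p orbY by blast
  obtain s' h' where sh': "s' \<in> torus" "h' \<in> H" "r = (s' * h' * (s * h * t), \<alpha>, \<rho> (vinv h') * (\<rho> (vinv h) * z))"
    using assms(2) unfolding sh(3) orbY by blast
  have "\<rho> (vinv (h' * h)) = \<rho> (vinv h') * \<rho> (vinv h)"
    using \<rho>_hom H_vinv sh(2) sh'(2) by (simp add: vinv_mult)
  then show ?thesis unfolding sh'(3) orbY p
    by (intro exI[of _ "s' * s"] exI[of _ "h' * h"]) (simp add: mult_ac torus_mult sh sh' H_mult)
qed

lemma orbY_eq: "q \<in> orb GG p \<Longrightarrow> orb GG q = orb GG p"
  using orbY_sym orbY_trans by blast

lemma satY: "U \<subseteq> rpts GG Z \<Longrightarrow> x \<in> \<Union>U \<longleftrightarrow> orb GG x \<in> U"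
  by (rule sat_orb[OF orbY_refl orbY_eq])

lemma orbY_ZY: assumes "q \<in> orb GG p" "p \<in> ZZ" shows "q \<in> ZZ"
proof -
  obtain t \<alpha> z where p: "p = (t, \<alpha>, z)" by (cases p) auto
  obtain s h where sh: "s \<in> torus" "h \<in> H" "q = (s * h * t, \<alpha>, \<rho> (vinv h) * z)"
    using assms(1) unfolding p orbY by blast
  have Z: "t \<in> torus" "\<alpha> = 0" "xiprop z" using assms(2) p ZY_iff by auto
  have n: "cmod (\<rho> (vinv h) $ i) = 1" for i
    using rho_torus[OF H_vinv[OF sh(2)]] by (simp add: torus_def)
  have "xiprop (\<rho> (vinv h) * z)" using Z(3) by (simp add: xiprop_def norm_mult n)
  moreover have "s * h * t \<in> torus" using sh H_torus[OF sh(2)] Z(1) torus_mult by blast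
  ultimately show ?thesis unfolding sh(3) ZY_iff using Z by auto
qed

lemma orbY_MY: assumes "q \<in> orb GG p" "p \<in> MY H" shows "q \<in> MY H"
proof -
  obtain t \<alpha> z where p: "p = (t, \<alpha>, z)" by (cases p) auto
  obtain s h where sh: "s \<in> torus" "h \<in> H" "q = (s * h * t, \<alpha>, \<rho> (vinv h) * z)"
    using assms(1) unfolding p orbY by blast
  moreover have "s * h * t \<in> torus" using sh H_torus[OF sh(2)] assms(2) p torus_mult by (auto simp: MY_def)
  ultimately show ?thesis using assms(2) p by (auto simp: MY_def)
qed

lemma GY_orb: "g \<in> GG \<Longrightarrow> g x \<in> orb GG x"
  by (auto simp: orb_def)

lemma orbY_polyP: assumes "q \<in> orb GG p" shows "polyP \<xi> (snd (snd q)) = polyP \<xi> (snd (snd p))"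
proof -
  obtain t \<alpha> z where p: "p = (t, \<alpha>, z)" by (cases p) auto
  obtain s h where sh: "s \<in> torus" "h \<in> H" "q = (s * h * t, \<alpha>, \<rho> (vinv h) * z)"
    using assms(1) unfolding p orbY by blast
  then show ?thesis using p polyP_rho[OF H_vinv[OF sh(2)]] by (simp add: polyP_mult)
qed

lemma K_one: "1 \<in> K"
  by (simp add: Kgrp_def torus_one)

lemma K_mult: "a \<in> K \<Longrightarrow> b \<in> K \<Longrightarrow> a * b \<in> K"
  by (simp add: Kgrp_def torus_mult power_mult_distrib prod.distrib)

lemma K_vinv: assumes "a \<in> K" shows "vinv a \<in> K"
proof -
  have "(\<Prod>j\<in>UNIV. (vinv a $ j) ^ \<xi> (\<iota> j)) = inverse (\<Prod>j\<in>UNIV. (a $ j) ^ \<xi> (\<iota> j))"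
    using prod_inversef[of "\<lambda>j. (a $ j) ^ \<xi> (\<iota> j)" UNIV] by (simp add: vinv_def power_inverse o_def)
  then show ?thesis using assms by (simp add: Kgrp_def torus_vinv)
qed

lemma orbK: "w \<in> orb (GK K) z \<longleftrightarrow> (\<exists>l\<in>K. w = l * z)"
  unfolding orb_def GK_def by auto

lemma orbK_refl: "z \<in> orb (GK K) z"
  unfolding orbK using K_one by force

lemma orbK_sym: assumes "w \<in> orb (GK K) z" shows "z \<in> orb (GK K) w"
proof -
  obtain l where l: "l \<in> K" "w = l * z" using assms orbK by blast
  have lt: "l \<in> torus" using l(1) by (simp add: Kgrp_def)
  have "z = vinv l * w" using l(2) vinv_mult_self[OF lt] by (simp add: mult.assoc[symmetric])
  then show ?thesis unfolding orbK using K_vinv[OF l(1)] by blast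
qed

lemma orbK_trans: assumes "w \<in> orb (GK K) z" "v \<in> orb (GK K) w" shows "v \<in> orb (GK K) z"
  using assms K_mult unfolding orbK by (metis mult.assoc)

lemma orbK_eq: "w \<in> orb (GK K) z \<Longrightarrow> orb (GK K) w = orb (GK K) z"
  using orbK_sym orbK_trans by blast

lemma satK: "U \<subseteq> rpts (GK K) Z \<Longrightarrow> x \<in> \<Union>U \<longleftrightarrow> orb (GK K) x \<in> U"
  by (rule sat_orb[OF orbK_refl orbK_eq])

lemma orbK_ZK: assumes "w \<in> orb (GK K) z" "z \<in> ZK K" shows "w \<in> ZK K"
proof -
  obtain l where l: "l \<in> K" "w = l * z" using assms orbK by blast
  have n: "cmod (l $ j) = 1" for j using l(1) by (simp add: Kgrp_def torus_def)
  show ?thesis using assms(2) unfolding l(2) ZK_iff by (simp add: norm_mult n)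
qed

lemma ext_K: assumes l: "l \<in> K"
  shows "\<exists>h\<in>H. \<rho> (vinv h) = (\<chi> i. if i \<in> range \<iota> then l $ (inv \<iota> i) else 1)"
proof -
  define lam where "lam = (\<chi> i. if i \<in> range \<iota> then l $ (inv \<iota> i) else 1)"
  have lt: "l \<in> torus" using l by (simp add: Kgrp_def)
  have "lam \<in> torus" using lt by (simp add: torus_def lam_def)
  moreover have "polyP \<xi> lam = 1"
  proof -
    have "polyP \<xi> lam = (\<Prod>i\<in>range \<iota>. (lam $ i) ^ \<xi> i)"
      unfolding polyP_def by (rule prod.mono_neutral_right) (use \<xi>_supp in auto)
    also have "\<dots> = (\<Prod>j\<in>UNIV. (lam $ \<iota> j) ^ \<xi> (\<iota> j))"
      using prod.reindex[of \<iota> UNIV "\<lambda>i. (lam $ i) ^ \<xi> i"] \<iota>_inj by simp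
    also have "\<dots> = (\<Prod>j\<in>UNIV. (l $ j) ^ \<xi> (\<iota> j))"
      by (simp add: lam_def inv_f_f[OF \<iota>_inj])
    also have "\<dots> = 1" using l by (simp add: Kgrp_def)
    finally show ?thesis .
  qed
  ultimately obtain h0 where h0: "h0 \<in> H" "\<rho> h0 = lam" using rho_surj by blast
  have "vinv h0 \<in> H" "\<rho> (vinv (vinv h0)) = lam" using h0 H_vinv by (auto simp: vinv_vinv)
  then show ?thesis unfolding lam_def by blast
qed

lemma incl_orb: assumes "l \<in> K" shows "inclY \<iota> (l * z) \<in> orb GG (inclY \<iota> z)"
proof -
  obtain h where h: "h \<in> H" "\<rho> (vinv h) = (\<chi> i. if i \<in> range \<iota> then l $ (inv \<iota> i) else 1)"
    using ext_K[OF assms] by blast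
  have ht: "h \<in> torus" using H_torus h(1) by blast
  have "vinv h * h * 1 = 1" using vinv_mult_self[OF ht] by simp
  moreover have "\<rho> (vinv h) * inclv z = inclv (l * z)"
    using h(2) by (simp add: inclv_def vec_eq_iff)
  ultimately show ?thesis unfolding inclY_eq orbY
    by (intro exI[of _ "vinv h"] exI[of _ h]) (simp add: h(1) torus_vinv ht)
qed

lemma proj_K: assumes "h \<in> H" shows "(\<chi> j. \<rho> (vinv h) $ (\<iota> j)) \<in> K"
proof -
  have ht: "\<rho> (vinv h) \<in> torus" using rho_torus H_vinv assms by blast
  have "(\<Prod>j\<in>UNIV. (\<rho> (vinv h) $ \<iota> j) ^ \<xi> (\<iota> j)) = (\<Prod>i\<in>range \<iota>. (\<rho> (vinv h) $ i) ^ \<xi> i)"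
    using prod.reindex[of \<iota> UNIV "\<lambda>i. (\<rho> (vinv h) $ i) ^ \<xi> i"] \<iota>_inj by simp
  also have "\<dots> = polyP \<xi> (\<rho> (vinv h))"
    unfolding polyP_def by (rule prod.mono_neutral_left) (use \<xi>_supp in auto)
  also have "\<dots> = 1" using polyP_rho H_vinv assms by blast
  finally show ?thesis using ht by (simp add: Kgrp_def torus_def)
qed

lemma orbY_proj: assumes "q \<in> orb GG p"
  shows "\<exists>l\<in>K. projv (snd (snd q)) = l * projv (snd (snd p))"
proof -
  obtain t \<alpha> z where p: "p = (t, \<alpha>, z)" by (cases p) auto
  obtain s h where sh: "s \<in> torus" "h \<in> H" "q = (s * h * t, \<alpha>, \<rho> (vinv h) * z)"
    using assms(1) unfolding p orbY by blast
  have "projv (snd (snd q)) = (\<chi> j. \<rho> (vinv h) $ (\<iota> j)) * projv (snd (snd p))"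
    using sh(3) p by (simp add: projv_def vec_eq_iff)
  then show ?thesis using proj_K[OF sh(2)] by blast
qed

lemma incl_orb_inv: assumes "inclY \<iota> z1 \<in> orb GG (inclY \<iota> z2)" shows "z1 \<in> orb (GK K) z2"
proof -
  obtain l where "l \<in> K" "projv (inclv z1) = l * projv (inclv z2)"
    using orbY_proj[OF assms] by (auto simp: inclY_eq)
  then show ?thesis unfolding orbK proj_incl by blast
qed

lemma ZY_rep: assumes "p \<in> ZZ"
  shows "projv (snd (snd p)) \<in> ZK K" "inclY \<iota> (projv (snd (snd p))) \<in> orb GG p"
proof -
  obtain t \<alpha> z where p: "p = (t, \<alpha>, z)" by (cases p) auto
  have Z: "t \<in> torus" "\<alpha> = 0" "xiprop z" using assms p ZY_iff by auto
  show "projv (snd (snd p)) \<in> ZK K" using xiprop_proj[OF Z(3)] p by simp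
  have "inclY \<iota> (projv z) = (vinv t * 1 * t, 0, \<rho> (vinv 1) * z)"
    using incl_proj[OF Z(3)] vinv_mult_self[OF Z(1)] by (simp add: inclY_eq vinv_one rho_one)
  then show "inclY \<iota> (projv (snd (snd p))) \<in> orb GG p"
    unfolding p orbY using Z by (intro exI[of _ "vinv t"] exI[of _ 1]) (simp add: torus_vinv H_one)
qed

end


lemma Basis_vec_cases: "b \<in> (Basis :: ('a::euclidean_space^'n) set) \<Longrightarrow> \<exists>i u. u \<in> Basis \<and> b = axis i u"
  by (auto simp: Basis_vec_def)

lemma Basis_prod3_cases:
  "b \<in> (Basis :: ('a::euclidean_space \<times> 'b::euclidean_space \<times> 'c::euclidean_space) set) \<Longrightarrow>
   (\<exists>u\<in>Basis. b = (u, 0, 0)) \<or> (\<exists>u\<in>Basis. b = (0, u, 0)) \<or> (\<exists>u\<in>Basis. b = (0, 0, u))"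
  by (auto simp: Basis_prod_def zero_prod_def)

lemma Basis_prod3_3: "u \<in> Basis \<Longrightarrow> ((0::'a::euclidean_space), (0::'b::euclidean_space), u) \<in> (Basis :: ('a \<times> 'b \<times> 'c::euclidean_space) set)"
  by (auto simp: Basis_prod_def)

lemma lin_cont: "linear (L :: 'a::euclidean_space \<Rightarrow> 'b::real_normed_vector) \<Longrightarrow> continuous_on S (\<lambda>x. L x + c)"
  by (intro continuous_intros linear_continuous_on) (simp add: linear_conv_bounded_linear)

context LM begin

abbreviation incY :: "complex^'k \<Rightarrow> (complex^'n) \<times> (real^'n) \<times> (complex^'m)" where
  "incY \<equiv> inclY \<iota>"

definition "Li (z::complex^'k) = ((0::complex^'n), (0::real^'n), inclv z)"
definition "projY (p :: (complex^'n) \<times> (real^'n) \<times> (complex^'m)) = projv (snd (snd p))"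

lemma inclY_aff: "incY = (\<lambda>z. Li z + (1, 0, 0))"
  by (simp add: fun_eq_iff inclY_eq Li_def)

lemma Li_lin: "linear Li"
  by (rule linearI) (simp_all add: Li_def inclv_def vec_eq_iff)

lemma inclv_axis: "inclv (axis j u) = axis (\<iota> j) u"
  by (auto simp: inclv_def axis_def vec_eq_iff inv_f_f[OF \<iota>_inj] f_inv_into_f)

lemma Li_basis: "\<forall>b\<in>Basis. Li b \<in> Basis \<or> Li b = 0"
proof (rule ballI)
  fix b :: "complex^'k" assume "b \<in> Basis"
  then obtain j u where u: "u \<in> Basis" "b = axis j u" using Basis_vec_cases by blast
  have "Li b = (0, 0, axis (\<iota> j) u)" using u by (simp add: Li_def inclv_axis)
  moreover have "((0::complex^'n), (0::real^'n), axis (\<iota> j) u) \<in> Basis"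
    using u(1) Basis_prod3_3[of "axis (\<iota> j) u"] by simp
  ultimately show "Li b \<in> Basis \<or> Li b = 0" by simp
qed

lemma projY_lin: "linear projY"
  by (rule linearI) (simp_all add: projY_def projv_def vec_eq_iff)

lemma projY_aff: "projY = (\<lambda>p. projY p + 0)" by simp

lemma projv_axis: "projv (axis i u) = (if i \<in> range \<iota> then axis (inv \<iota> i) u else 0)"
  using \<iota>_inj by (auto simp: projv_def axis_def vec_eq_iff inv_f_f[OF \<iota>_inj] f_inv_into_f dest: injD)

lemma projY_basis: "\<forall>b\<in>Basis. projY b \<in> Basis \<or> projY b = 0"
proof
  fix b :: "(complex^'n) \<times> (real^'n) \<times> (complex^'m)" assume "b \<in> Basis"
  then consider "\<exists>u\<in>Basis. b = (u, 0, 0)" | "\<exists>u\<in>Basis. b = (0, u, 0)" | "\<exists>u\<in>Basis. b = (0, 0, u)"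
    using Basis_prod3_cases by blast
  then show "projY b \<in> Basis \<or> projY b = 0"
  proof cases
    case 3
    then obtain v where v: "v \<in> Basis" "b = (0, 0, v)" by blast
    then obtain i u where u: "u \<in> Basis" "v = axis i u" using Basis_vec_cases by blast
    show ?thesis using u v by (simp add: projY_def projv_axis)
  qed (auto simp: projY_def projv_def vec_eq_iff)
qed

lemma smooth_incl: "smooth_on V F \<Longrightarrow> smooth_on (incY -` V) (F \<circ> incY)"
  unfolding inclY_aff by (rule smooth_on_comp[OF _ Li_lin Li_basis])

lemma smooth_proj: "smooth_on V F \<Longrightarrow> smooth_on (projY -` V) (F \<circ> projY)"
  using smooth_on_comp[OF _ projY_lin projY_basis, of V F 0] by simp

lemma cont_inclY: "continuous_on S incY"
  unfolding inclY_aff by (rule lin_cont[OF Li_lin])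

lemma cont_projY: "continuous_on S projY"
  using lin_cont[OF projY_lin, of S 0] by simp

end


lemma openin_UNIV_iff: "openin (top_of_set UNIV) S \<longleftrightarrow> open S"
  by simp

context LM begin

abbreviation "RK \<equiv> rpts (GK K) (ZK K)"
abbreviation "RY \<equiv> rpts GG ZZ"
abbreviation "ind \<equiv> induced H \<rho> \<iota>"

lemma induced_orb: "ind (orb (GK K) z) = orb GG (incY z)"
proof -
  define z' where "z' = (SOME z'. z' \<in> orb (GK K) z)"
  have "z' \<in> orb (GK K) z" unfolding z'_def using orbK_refl by (rule someI)
  then obtain l where l: "l \<in> K" "z' = l * z" using orbK by blast
  have "incY z' \<in> orb GG (incY z)" using incl_orb[OF l(1)] l(2) by simp
  then show ?thesis unfolding induced_def z'_def[symmetric] by (rule orbY_eq)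
qed

lemma incY_MY: "incY z \<in> MY H"
  by (simp add: inclY_eq MY_def torus_one annih_def)

lemma ZY_MY: "ZZ \<subseteq> MY H" by (auto simp: ZY_def)

lemma ind_bij: "bij_betw ind RK RY"
  unfolding bij_betw_def
proof
  show "inj_on ind RK"
  proof (rule inj_onI)
    fix o1 o2 assume o1: "o1 \<in> RK" and o2: "o2 \<in> RK" and eq: "ind o1 = ind o2"
    obtain z1 z2 where z: "z1 \<in> ZK K" "o1 = orb (GK K) z1" "z2 \<in> ZK K" "o2 = orb (GK K) z2"
      using o1 o2 by (auto simp: rpts_def)
    have "orb GG (incY z1) = orb GG (incY z2)" using eq z induced_orb by simp
    then have "incY z1 \<in> orb GG (incY z2)" using orbY_refl by blast
    then have "z1 \<in> orb (GK K) z2" by (rule incl_orb_inv)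
    then show "o1 = o2" using z orbK_eq by simp
  qed
  show "ind ` RK = RY"
  proof
    show "ind ` RK \<subseteq> RY"
      by (auto simp: rpts_def induced_orb incl_ZY)
    show "RY \<subseteq> ind ` RK"
    proof
      fix c assume "c \<in> RY"
      then obtain p where p: "p \<in> ZZ" "c = orb GG p" by (auto simp: rpts_def)
      have "c = ind (orb (GK K) (projv (snd (snd p))))"
        using induced_orb orbY_eq[OF ZY_rep(2)[OF p(1)]] p(2) by simp
      then show "c \<in> ind ` RK" using ZY_rep(1)[OF p(1)] by (auto simp: rpts_def)
    qed
  qed
qed

lemma PRE: assumes "U \<subseteq> RY" shows "\<Union>(ind -` U \<inter> RK) = {z \<in> ZK K. incY z \<in> \<Union>U}"
proof
  show "\<Union>(ind -` U \<inter> RK) \<subseteq> {z \<in> ZK K. incY z \<in> \<Union>U}"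
  proof
    fix z assume "z \<in> \<Union>(ind -` U \<inter> RK)"
    then obtain o' where o: "o' \<in> RK" "ind o' \<in> U" "z \<in> o'" by blast
    then obtain z' where z': "z' \<in> ZK K" "o' = orb (GK K) z'" by (auto simp: rpts_def)
    have zK: "z \<in> ZK K" using orbK_ZK o(3) z' by blast
    have "orb (GK K) z = o'" using orbK_eq o(3) z'(2) by blast
    then have "orb GG (incY z) \<in> U" using o(2) induced_orb by metis
    then have "incY z \<in> \<Union>U" using satY[OF assms] by blast
    then show "z \<in> {z \<in> ZK K. incY z \<in> \<Union>U}" using zK by blast
  qed
  show "{z \<in> ZK K. incY z \<in> \<Union>U} \<subseteq> \<Union>(ind -` U \<inter> RK)"
  proof
    fix z assume z: "z \<in> {z \<in> ZK K. incY z \<in> \<Union>U}"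
    then have "orb GG (incY z) \<in> U" using satY[OF assms] by blast
    then have "ind (orb (GK K) z) \<in> U" using induced_orb by simp
    moreover have "orb (GK K) z \<in> RK" using z by (auto simp: rpts_def)
    ultimately show "z \<in> \<Union>(ind -` U \<inter> RK)" using orbK_refl by blast
  qed
qed

lemma UY_sub: assumes "U \<subseteq> RY" shows "\<Union>U \<subseteq> ZZ"
proof
  fix x assume "x \<in> \<Union>U"
  then obtain p where "p \<in> ZZ" "x \<in> orb GG p" using assms by (auto simp: rpts_def)
  then show "x \<in> ZZ" using orbY_ZY by blast
qed

lemma UY_char: assumes "U \<subseteq> RY" "p \<in> ZZ" shows "p \<in> \<Union>U \<longleftrightarrow> incY (projY p) \<in> \<Union>U"
proof -
  have "orb GG (incY (projY p)) = orb GG p"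
    using orbY_eq[OF ZY_rep(2)[OF assms(2)]] by (simp add: projY_def)
  then show ?thesis using satY[OF assms(1)] by metis
qed

lemma projY_ZK: "p \<in> ZZ \<Longrightarrow> projY p \<in> ZK K"
  using ZY_rep(1) by (simp add: projY_def)

lemma opens_eq: assumes U: "U \<subseteq> RY"
  shows "r_open GG ZZ U \<longleftrightarrow> r_open (GK K) (ZK K) (ind -` U \<inter> RK)"
proof -
  have P: "\<Union>(ind -` U \<inter> RK) = ZK K \<inter> incY -` \<Union>U" using PRE[OF U] by auto
  have Q: "ZZ \<inter> projY -` (ZK K \<inter> incY -` \<Union>U) = \<Union>U"
  proof (intro set_eqI iffI)
    fix x assume "x \<in> ZZ \<inter> projY -` (ZK K \<inter> incY -` \<Union>U)"
    then show "x \<in> \<Union>U" using UY_char[OF U, of x] by blast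
  next
    fix x assume x: "x \<in> \<Union>U"
    then have "x \<in> ZZ" using UY_sub[OF U] by blast
    then show "x \<in> ZZ \<inter> projY -` (ZK K \<inter> incY -` \<Union>U)"
      using UY_char[OF U, of x] x projY_ZK by blast
  qed
  show ?thesis
  proof
    assume "r_open GG ZZ U"
    then have "openin (top_of_set ZZ) (\<Union>U)" by (simp add: r_open_def)
    then have "openin (top_of_set (ZK K)) (ZK K \<inter> incY -` \<Union>U)"
      using continuous_openin_preimage[OF cont_inclY, of "ZK K" ZZ "\<Union>U"] incl_ZY by blast
    then show "r_open (GK K) (ZK K) (ind -` U \<inter> RK)" by (simp add: r_open_def P)
  next
    assume "r_open (GK K) (ZK K) (ind -` U \<inter> RK)"
    then have "openin (top_of_set (ZK K)) (ZK K \<inter> incY -` \<Union>U)" by (simp add: r_open_def P)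
    then have "openin (top_of_set ZZ) (ZZ \<inter> projY -` (ZK K \<inter> incY -` \<Union>U))"
      using continuous_openin_preimage[OF cont_projY, of ZZ "ZK K" "ZK K \<inter> incY -` \<Union>U"] projY_ZK by blast
    then have "openin (top_of_set ZZ) (\<Union>U)" by (simp only: Q)
    then show "r_open GG ZZ U" using U by (simp add: r_open_def)
  qed
qed

end


context LM begin

lemma GK_elem: "g \<in> GK K \<Longrightarrow> \<exists>l\<in>K. g = (\<lambda>z. l * z)"
  by (auto simp: GK_def)

lemma GK_intro: "l \<in> K \<Longrightarrow> (\<lambda>z. l * z) \<in> GK K"
  by (auto simp: GK_def)

lemma orb_GY_elem: "q \<in> orb GG p \<Longrightarrow> \<exists>g\<in>GG. q = g p"
  by (auto simp: orb_def)

lemma smooth_fwd: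
  assumes U: "r_open GG ZZ U" and S: "r_smooth (MY H) GG ZZ U f"
  shows "r_smooth UNIV (GK K) (ZK K) (ind -` U \<inter> RK) (f \<circ> ind)"
proof -
  have UR: "U \<subseteq> RY" using U by (simp add: r_open_def)
  obtain W F where W: "openin (top_of_set (MY H)) W" and inv: "\<forall>g\<in>GG. \<forall>x\<in>W. g x \<in> W"
    and WZ: "W \<inter> ZZ = \<Union>U" and sm: "smooth_sub (MY H) W F"
    and Finv: "\<forall>g\<in>GG. \<forall>x\<in>W. F (g x) = F x" and Ff: "\<forall>x\<in>\<Union>U. F x = f (orb GG x)"
    using S unfolding r_smooth_def by blast
  obtain V F' where V: "open V" "V \<inter> MY H = W" "smooth_on V F'" "\<forall>x\<in>W. F' x = F x"
    using sm unfolding smooth_sub_def by blast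
  have inW: "incY z \<in> W \<longleftrightarrow> incY z \<in> V" for z using V(2) incY_MY by blast
  define W' where "W' = incY -` V"
  have sm': "smooth_on W' (F' \<circ> incY)" unfolding W'_def by (rule smooth_incl[OF V(3)])
  then have opW': "open W'" by (simp add: smooth_on_def)
  have gK: "g x \<in> W' \<and> F (incY (g x)) = F (incY x)" if g: "g \<in> GK K" and x: "x \<in> W'" for g x
  proof -
    obtain l where l: "l \<in> K" "g = (\<lambda>z. l * z)" using GK_elem[OF g] by blast
    obtain g' where g': "g' \<in> GG" "incY (l * x) = g' (incY x)"
      using orb_GY_elem[OF incl_orb[OF l(1)]] by blast
    have xW: "incY x \<in> W" using x inW by (simp add: W'_def)
    then have "g' (incY x) \<in> W" using inv g'(1) by blast
    then have "incY (l * x) \<in> W" using g'(2) by simp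
    then have 1: "g x \<in> W'" using inW l(2) by (simp add: W'_def)
    have "F (incY (g x)) = F (g' (incY x))" using l(2) g'(2) by simp
    also have "\<dots> = F (incY x)" using Finv g'(1) xW by blast
    finally show ?thesis using 1 by simp
  qed
  show ?thesis
    unfolding r_smooth_def
  proof (intro exI[of _ W'] exI[of _ "F \<circ> incY"] conjI ballI)
    show "openin (top_of_set UNIV) W'" using opW' by simp
    show "\<And>g x. g \<in> GK K \<Longrightarrow> x \<in> W' \<Longrightarrow> g x \<in> W'" using gK by blast
    show "W' \<inter> ZK K = \<Union>(ind -` U \<inter> RK)"
      unfolding PRE[OF UR] W'_def using inW WZ incl_ZY by blast
    show "smooth_sub UNIV W' (F \<circ> incY)"
      unfolding smooth_sub_def
      using opW' sm' V(4) inW by (intro exI[of _ W'] exI[of _ "F' \<circ> incY"]) (auto simp: W'_def)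
    show "\<And>g x. g \<in> GK K \<Longrightarrow> x \<in> W' \<Longrightarrow> (F \<circ> incY) (g x) = (F \<circ> incY) x" using gK by simp
    fix x assume "x \<in> \<Union>(ind -` U \<inter> RK)"
    then have "x \<in> ZK K" "incY x \<in> \<Union>U" using PRE[OF UR] by auto
    then have "F (incY x) = f (orb GG (incY x))" using Ff by blast
    then show "(F \<circ> incY) x = (f \<circ> ind) (orb (GK K) x)" by (simp add: induced_orb)
  qed
qed

lemma smooth_bwd:
  assumes U: "r_open GG ZZ U" and S: "r_smooth UNIV (GK K) (ZK K) (ind -` U \<inter> RK) (f \<circ> ind)"
  shows "r_smooth (MY H) GG ZZ U f"
proof -
  have UR: "U \<subseteq> RY" using U by (simp add: r_open_def)
  obtain W' F'' where W': "openin (top_of_set UNIV) W'" and inv: "\<forall>g\<in>GK K. \<forall>x\<in>W'. g x \<in> W'"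
    and WZ: "W' \<inter> ZK K = \<Union>(ind -` U \<inter> RK)" and sm: "smooth_sub UNIV W' F''"
    and Finv: "\<forall>g\<in>GK K. \<forall>x\<in>W'. F'' (g x) = F'' x"
    and Ff: "\<forall>x\<in>\<Union>(ind -` U \<inter> RK). F'' x = (f \<circ> ind) (orb (GK K) x)"
    using S unfolding r_smooth_def by (elim exE conjE) (rule that; assumption)
  obtain V' F3 where V': "open V'" "V' \<inter> UNIV = W'" "smooth_on V' F3" "\<forall>x\<in>W'. F3 x = F'' x"
    using sm unfolding smooth_sub_def by blast
  have VW: "V' = W'" using V'(2) by simp
  define W where "W = MY H \<inter> projY -` W'"
  have sm3: "smooth_on (projY -` W') (F3 \<circ> projY)" using smooth_proj[OF V'(3)] VW by simp
  then have opV: "open (projY -` W')" by (simp add: smooth_on_def)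
  have P: "\<Union>(ind -` U \<inter> RK) = {z \<in> ZK K. incY z \<in> \<Union>U}" by (rule PRE[OF UR])
  have gY: "g x \<in> W \<and> F'' (projY (g x)) = F'' (projY x)" if g: "g \<in> GG" and x: "x \<in> W" for g x
  proof -
    have o: "g x \<in> orb GG x" using GY_orb[OF g] .
    then have "g x \<in> MY H" using orbY_MY x by (auto simp: W_def)
    obtain l where l: "l \<in> K" "projv (snd (snd (g x))) = l * projv (snd (snd x))"
      using orbY_proj[OF o] by blast
    have px: "projY x \<in> W'" using x by (simp add: W_def)
    have "projY (g x) = (\<lambda>z. l * z) (projY x)" using l(2) by (simp add: projY_def)
    then show ?thesis using inv Finv GK_intro[OF l(1)] px \<open>g x \<in> MY H\<close> by (simp add: W_def)
  qed
  have WZ': "W \<inter> ZZ = \<Union>U"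
  proof (intro set_eqI iffI)
    fix p assume p: "p \<in> W \<inter> ZZ"
    then have "projY p \<in> W' \<inter> ZK K" using projY_ZK by (auto simp: W_def)
    then have "incY (projY p) \<in> \<Union>U" using WZ P by auto
    then show "p \<in> \<Union>U" using UY_char[OF UR] p by blast
  next
    fix p assume p: "p \<in> \<Union>U"
    then have pZ: "p \<in> ZZ" using UY_sub[OF UR] by blast
    then have "incY (projY p) \<in> \<Union>U" using UY_char[OF UR] p by blast
    then have "projY p \<in> W'" using WZ P projY_ZK[OF pZ] by auto
    then show "p \<in> W \<inter> ZZ" using pZ ZY_MY by (auto simp: W_def)
  qed
  show ?thesis
    unfolding r_smooth_def
  proof (intro exI[of _ W] exI[of _ "F'' \<circ> projY"] conjI ballI)
    show "openin (top_of_set (MY H)) W" unfolding W_def using opV by blast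
    show "\<And>g x. g \<in> GG \<Longrightarrow> x \<in> W \<Longrightarrow> g x \<in> W" using gY by blast
    show "W \<inter> ZZ = \<Union>U" by (rule WZ')
    show "smooth_sub (MY H) W (F'' \<circ> projY)"
      unfolding smooth_sub_def
      using opV sm3 V'(4) by (intro exI[of _ "projY -` W'"] exI[of _ "F3 \<circ> projY"]) (auto simp: W_def)
    show "\<And>g x. g \<in> GG \<Longrightarrow> x \<in> W \<Longrightarrow> (F'' \<circ> projY) (g x) = (F'' \<circ> projY) x" using gY by simp
    fix x assume x: "x \<in> \<Union>U"
    then have xZ: "x \<in> ZZ" using UY_sub[OF UR] by blast
    have "incY (projY x) \<in> \<Union>U" using UY_char[OF UR xZ] x by blast
    then have "projY x \<in> \<Union>(ind -` U \<inter> RK)" using P projY_ZK[OF xZ] by auto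
    then have "F'' (projY x) = (f \<circ> ind) (orb (GK K) (projY x))" using Ff by blast
    then have "F'' (projY x) = f (orb GG (incY (projY x)))" by (simp add: induced_orb)
    also have "orb GG (incY (projY x)) = orb GG x"
      using orbY_eq[OF ZY_rep(2)[OF xZ]] by (simp add: projY_def)
    finally show "(F'' \<circ> projY) x = f (orb GG x)" by simp
  qed
qed

lemma main_diffeo:
  "diffeo RK (r_open (GK K) (ZK K)) (r_smooth UNIV (GK K) (ZK K))
          RY (r_open GG ZZ) (r_smooth (MY H) GG ZZ) ind"
  unfolding diffeo_def
  using ind_bij opens_eq smooth_fwd smooth_bwd by blast

lemma first_part: "\<forall>z\<in>ZK K. incY z \<in> ZZ \<and> ind (orb (GK K) z) = orb GG (incY z)"
  using incl_ZY induced_orb by blast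

end


locale LMC = LM H \<rho> B \<xi> \<iota>
  for H :: "(complex^'n) set" and \<rho> :: "complex^'n \<Rightarrow> complex^'m" and B :: "real^'n^'n"
    and \<xi> :: "'m \<Rightarrow> nat" and \<iota> :: "'k::finite \<Rightarrow> 'm" +
  fixes i0 :: 'm
  assumes xi0: "\<xi> = (\<lambda>i. if i = i0 then 1 else 0)"
begin

definition zc :: "(complex^'n) \<times> (real^'n) \<times> (complex^'m) \<Rightarrow> complex" where
  "zc p = snd (snd p) $ i0"

definition emb :: "complex \<Rightarrow> (complex^'n) \<times> (real^'n) \<times> (complex^'m)" where
  "emb w = (1, 0, \<chi> i. if i = i0 then w else 0)"

lemma polyP_i0: "polyP \<xi> z = z $ i0"
proof -
  have "polyP \<xi> z = (\<Prod>i\<in>UNIV. if i = i0 then z $ i else 1)"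
    unfolding polyP_def xi0 by (rule prod.cong) auto
  then show ?thesis by simp
qed

lemma orb_zc: "q \<in> orb GG p \<Longrightarrow> zc q = zc p"
  using orbY_polyP by (simp add: zc_def polyP_i0)

lemma Pbar_orb: "Pbar \<xi> (orb GG p) = zc p"
proof -
  have "(SOME q. q \<in> orb GG p) \<in> orb GG p" using orbY_refl by (rule someI)
  then show ?thesis unfolding Pbar_def using orbY_polyP by (simp add: zc_def polyP_i0)
qed

lemma emb_ZY: "emb w \<in> ZZ"
proof -
  have "xiprop (\<chi> i. if i = i0 then w else 0)"
    unfolding xiprop_def by (rule exI[of _ "(cmod w)\<^sup>2"]) (simp add: xi0)
  then show ?thesis by (simp add: emb_def ZY_iff torus_one)
qed

lemma zc_emb: "zc (emb w) = w" by (simp add: zc_def emb_def)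

lemma ZY_emb: assumes p: "p \<in> ZZ" shows "orb GG p = orb GG (emb (zc p))"
proof -
  obtain t \<alpha> z where pp: "p = (t, \<alpha>, z)" by (cases p) auto
  have Z: "t \<in> torus" "\<alpha> = 0" "xiprop z" using p pp ZY_iff by auto
  obtain a where a: "\<And>i. (cmod (z$i))\<^sup>2 = a * real (\<xi> i)" using Z(3) by (auto simp: xiprop_def)
  have "z $ i = 0" if "i \<noteq> i0" for i using a[of i] that by (simp add: xi0)
  then have z: "z = (\<chi> i. if i = i0 then z $ i0 else 0)"
    by (auto simp: vec_eq_iff)
  have "incY (projv z) = emb (zc p)"
    using incl_proj[OF Z(3)] z pp by (simp add: inclY_eq emb_def zc_def)
  moreover have "incY (projv z) \<in> orb GG p" using ZY_rep(2)[OF p] pp by simp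
  ultimately show ?thesis using orbY_eq by metis
qed

lemma Pbar_bij: "bij_betw (Pbar \<xi>) RY UNIV"
  unfolding bij_betw_def
proof
  show "inj_on (Pbar \<xi>) RY"
  proof (rule inj_onI)
    fix c1 c2 assume c1: "c1 \<in> RY" and c2: "c2 \<in> RY" and eq: "Pbar \<xi> c1 = Pbar \<xi> c2"
    obtain p1 p2 where p: "p1 \<in> ZZ" "c1 = orb GG p1" "p2 \<in> ZZ" "c2 = orb GG p2"
      using c1 c2 by (auto simp: rpts_def)
    have "zc p1 = zc p2" using eq p Pbar_orb by simp
    then show "c1 = c2" using p ZY_emb by metis
  qed
  show "Pbar \<xi> ` RY = UNIV"
  proof (intro set_eqI iffI)
    fix w :: complex
    have "orb GG (emb w) \<in> RY" using emb_ZY by (auto simp: rpts_def)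
    moreover have "Pbar \<xi> (orb GG (emb w)) = w" by (simp add: Pbar_orb zc_emb)
    ultimately show "w \<in> Pbar \<xi> ` RY" by force
  qed simp
qed

lemma PreC: "\<Union>(Pbar \<xi> -` U \<inter> RY) = {p \<in> ZZ. zc p \<in> U}"
proof (intro set_eqI iffI)
  fix p assume "p \<in> \<Union>(Pbar \<xi> -` U \<inter> RY)"
  then obtain c where c: "c \<in> RY" "Pbar \<xi> c \<in> U" "p \<in> c" by blast
  then obtain q where q: "q \<in> ZZ" "c = orb GG q" by (auto simp: rpts_def)
  have "p \<in> ZZ" using orbY_ZY c(3) q by blast
  moreover have "zc p = zc q" using orb_zc c(3) q(2) by blast
  ultimately show "p \<in> {p \<in> ZZ. zc p \<in> U}" using c(2) q(2) Pbar_orb by simp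
next
  fix p assume p: "p \<in> {p \<in> ZZ. zc p \<in> U}"
  then have "orb GG p \<in> Pbar \<xi> -` U \<inter> RY" by (auto simp: rpts_def Pbar_orb)
  then show "p \<in> \<Union>(Pbar \<xi> -` U \<inter> RY)" using orbY_refl by blast
qed

definition "Le (w::complex) = ((0::complex^'n), (0::real^'n), (axis i0 w :: complex^'m))"

lemma emb_aff: "emb = (\<lambda>w. Le w + (1, 0, 0))"
  by (simp add: fun_eq_iff emb_def Le_def axis_def)

lemma Le_lin: "linear Le"
  by (rule linearI) (simp_all add: Le_def axis_def vec_eq_iff)

lemma Le_basis: "\<forall>b\<in>Basis. Le b \<in> Basis \<or> Le b = 0"
proof (rule ballI)
  fix b :: complex assume b: "b \<in> Basis"
  have "((0::complex^'n), (0::real^'n), (axis i0 b :: complex^'m)) \<in> Basis"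
    using b Basis_prod3_3[of "axis i0 b :: complex^'m"] by simp
  then show "Le b \<in> Basis \<or> Le b = 0" by (simp add: Le_def)
qed

lemma zc_lin: "linear zc"
  by (rule linearI) (simp_all add: zc_def)

lemma zc_basis: "\<forall>b\<in>Basis. zc b \<in> Basis \<or> zc b = 0"
proof
  fix b :: "(complex^'n) \<times> (real^'n) \<times> (complex^'m)" assume "b \<in> Basis"
  then consider "\<exists>u\<in>Basis. b = (u, 0, 0)" | "\<exists>u\<in>Basis. b = (0, u, 0)" | "\<exists>u\<in>Basis. b = (0, 0, u)"
    using Basis_prod3_cases by blast
  then show "zc b \<in> Basis \<or> zc b = 0"
  proof cases
    case 3
    then obtain v where v: "v \<in> Basis" "b = (0, 0, v)" by blast
    then obtain i u where u: "u \<in> Basis" "v = axis i u" using Basis_vec_cases by blast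
    show ?thesis using u v by (simp add: zc_def axis_def)
  qed (auto simp: zc_def)
qed

lemma smooth_zc: "smooth_on V F \<Longrightarrow> smooth_on (zc -` V) (F \<circ> zc)"
  using smooth_on_comp[OF _ zc_lin zc_basis, of V F 0] by simp

lemma smooth_emb: "smooth_on V F \<Longrightarrow> smooth_on (emb -` V) (F \<circ> emb)"
  unfolding emb_aff by (rule smooth_on_comp[OF _ Le_lin Le_basis])

lemma cont_zc: "continuous_on S zc"
  using lin_cont[OF zc_lin, of S 0] by simp

lemma cont_emb: "continuous_on S emb"
  unfolding emb_aff by (rule lin_cont[OF Le_lin])

lemma opensC: "open U \<longleftrightarrow> r_open GG ZZ (Pbar \<xi> -` U \<inter> RY)"
proof -
  have pc: "\<Union>(Pbar \<xi> -` U \<inter> RY) = ZZ \<inter> zc -` U" using PreC by auto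
  have r: "r_open GG ZZ (Pbar \<xi> -` U \<inter> RY) \<longleftrightarrow> openin (top_of_set ZZ) (ZZ \<inter> zc -` U)"
    unfolding r_open_def pc by simp
  show ?thesis
  proof
    assume "open U"
    then show "r_open GG ZZ (Pbar \<xi> -` U \<inter> RY)"
      unfolding r by (rule continuous_openin_preimage_gen[OF cont_zc])
  next
    assume "r_open GG ZZ (Pbar \<xi> -` U \<inter> RY)"
    then have o: "openin (top_of_set ZZ) (ZZ \<inter> zc -` U)" using r by simp
    have "emb \<in> UNIV \<rightarrow> ZZ" using emb_ZY by auto
    then have "openin (top_of_set UNIV) (UNIV \<inter> emb -` (ZZ \<inter> zc -` U))"
      using continuous_openin_preimage[OF cont_emb _ o] by blast
    moreover have "UNIV \<inter> emb -` (ZZ \<inter> zc -` U) = U"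
    proof (intro set_eqI iffI)
      fix w assume "w \<in> UNIV \<inter> emb -` (ZZ \<inter> zc -` U)"
      then have "zc (emb w) \<in> U" by simp
      then show "w \<in> U" by (simp only: zc_emb)
    next
      fix w assume "w \<in> U"
      then show "w \<in> UNIV \<inter> emb -` (ZZ \<inter> zc -` U)" using emb_ZY[of w] by (simp add: zc_emb)
    qed
    ultimately show "open U" by simp
  qed
qed

lemma smoothC:
  assumes U: "open U"
  shows "smooth_on U f \<longleftrightarrow> r_smooth (MY H) GG ZZ (Pbar \<xi> -` U \<inter> RY) (f \<circ> Pbar \<xi>)"
proof
  assume sm: "smooth_on U f"
  define W where "W = MY H \<inter> zc -` U"
  have smV: "smooth_on (zc -` U) (f \<circ> zc)" by (rule smooth_zc[OF sm])
  then have opV: "open (zc -` U)" by (simp add: smooth_on_def)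
  show "r_smooth (MY H) GG ZZ (Pbar \<xi> -` U \<inter> RY) (f \<circ> Pbar \<xi>)"
    unfolding r_smooth_def
  proof (intro exI[of _ W] exI[of _ "f \<circ> zc"] conjI ballI)
    show "openin (top_of_set (MY H)) W" unfolding W_def using opV by blast
    show "g x \<in> W" if "g \<in> GG" "x \<in> W" for g x
    proof -
      have o: "g x \<in> orb GG x" using GY_orb[OF that(1)] .
      have "x \<in> MY H" "zc x \<in> U" using that(2) by (auto simp: W_def)
      then show ?thesis using orbY_MY[OF o] orb_zc[OF o] by (simp add: W_def)
    qed
    show "W \<inter> ZZ = \<Union>(Pbar \<xi> -` U \<inter> RY)" unfolding PreC W_def using ZY_MY by auto
    show "smooth_sub (MY H) W (f \<circ> zc)"
      unfolding smooth_sub_def using opV smV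
      by (intro exI[of _ "zc -` U"] exI[of _ "f \<circ> zc"]) (auto simp: W_def)
    show "(f \<circ> zc) (g x) = (f \<circ> zc) x" if "g \<in> GG" "x \<in> W" for g x
      using orb_zc[OF GY_orb[OF that(1)]] by simp
    show "(f \<circ> zc) x = (f \<circ> Pbar \<xi>) (orb GG x)" for x
      by (simp add: Pbar_orb)
  qed
next
  assume S: "r_smooth (MY H) GG ZZ (Pbar \<xi> -` U \<inter> RY) (f \<circ> Pbar \<xi>)"
  obtain W F where WZ: "W \<inter> ZZ = \<Union>(Pbar \<xi> -` U \<inter> RY)" and sm: "smooth_sub (MY H) W F"
    and Ff: "\<forall>x\<in>\<Union>(Pbar \<xi> -` U \<inter> RY). F x = (f \<circ> Pbar \<xi>) (orb GG x)"
    using S unfolding r_smooth_def by (elim exE conjE) (rule that; assumption)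
  obtain V F' where V: "open V" "V \<inter> MY H = W" "smooth_on V F'" "\<forall>x\<in>W. F' x = F x"
    using sm unfolding smooth_sub_def by blast
  have sm': "smooth_on (emb -` V) (F' \<circ> emb)" by (rule smooth_emb[OF V(3)])
  have inPre: "emb w \<in> \<Union>(Pbar \<xi> -` U \<inter> RY)" if "w \<in> U" for w
    unfolding PreC using emb_ZY zc_emb that by simp
  have sub: "U \<subseteq> emb -` V"
  proof
    fix w assume "w \<in> U"
    then have "emb w \<in> W" using inPre WZ by blast
    then show "w \<in> emb -` V" using V(2) by blast
  qed
  have eq: "\<forall>w\<in>U. (F' \<circ> emb) w = f w"
  proof
    fix w assume w: "w \<in> U"
    then have "emb w \<in> W" using inPre WZ by blast
    then have "F' (emb w) = F (emb w)" using V(4) by blast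
    also have "\<dots> = (f \<circ> Pbar \<xi>) (orb GG (emb w))" using Ff inPre[OF w] by blast
    also have "\<dots> = f (Pbar \<xi> (orb GG (emb w)))" by simp
    also have "\<dots> = f w" by (simp add: Pbar_orb zc_emb)
    finally show "(F' \<circ> emb) w = f w" by simp
  qed
  show "smooth_on U f" by (rule smooth_on_local[OF sm' U sub eq])
qed

lemma C_part:
  "diffeo RY (r_open GG ZZ) (r_smooth (MY H) GG ZZ) UNIV open smooth_on (Pbar \<xi>)
   \<and> (\<forall>w. orb GG (emb w) \<in> RY \<and> Pbar \<xi> (orb GG (emb w)) = w)
   \<and> (\<forall>c\<in>RY. orb GG (emb (Pbar \<xi> c)) = c)"
proof (intro conjI allI ballI)
  show "diffeo RY (r_open GG ZZ) (r_smooth (MY H) GG ZZ) UNIV open smooth_on (Pbar \<xi>)"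
    unfolding diffeo_def using Pbar_bij opensC smoothC by blast
  show "orb GG (emb w) \<in> RY" for w using emb_ZY by (auto simp: rpts_def)
  show "Pbar \<xi> (orb GG (emb w)) = w" for w by (simp add: Pbar_orb zc_emb)
  fix c assume "c \<in> RY"
  then obtain p where p: "p \<in> ZZ" "c = orb GG p" by (auto simp: rpts_def)
  then show "orb GG (emb (Pbar \<xi> c)) = c" using ZY_emb[OF p(1)] Pbar_orb[of p] by simp
qed

end


theorem lemma2p6:
  fixes H :: "(complex^'n) set"
    and \<rho> :: "complex^'n \<Rightarrow> complex^'m"
    and B :: "real^'n^'n"
    and \<xi> :: "'m \<Rightarrow> nat"
    and \<iota> :: "'k::finite \<Rightarrow> 'm"
  assumes H: "closed_subgroup H"
    and dimm: "CARD('m) = dim (lie_alg H) + 1"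
    and \<rho>_hom: "\<forall>a\<in>H. \<forall>b\<in>H. \<rho> (a * b) = \<rho> a * \<rho> b"
    and \<rho>_cont: "continuous_on H \<rho>"
    and \<rho>_inj: "inj_on \<rho> H"
    and \<rho>_torus: "\<rho> ` H \<subseteq> torus"
    and B_sym: "transpose B = B"
    and B_pos: "\<forall>x. x \<noteq> 0 \<longrightarrow> x \<bullet> (B *v x) > 0"
    and Y_tall: "tall B H \<rho>"
    and \<xi>_def: "exact_seq H \<rho> \<xi>"
    and \<iota>_inj: "inj \<iota>"
    and \<xi>_supp: "\<forall>i. i \<notin> range \<iota> \<longrightarrow> \<xi> i = 0"
  shows "(\<forall>z\<in>ZK (Kgrp \<iota> \<xi>). inclY \<iota> z \<in> ZY B H \<rho> \<and>
             induced H \<rho> \<iota> (orb (GK (Kgrp \<iota> \<xi>)) z) = orb (GY H \<rho>) (inclY \<iota> z))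
      \<and> diffeo (rpts (GK (Kgrp \<iota> \<xi>)) (ZK (Kgrp \<iota> \<xi>)))
               (r_open (GK (Kgrp \<iota> \<xi>)) (ZK (Kgrp \<iota> \<xi>)))
               (r_smooth UNIV (GK (Kgrp \<iota> \<xi>)) (ZK (Kgrp \<iota> \<xi>)))
               (rpts (GY H \<rho>) (ZY B H \<rho>)) (r_open (GY H \<rho>) (ZY B H \<rho>))
               (r_smooth (MY H) (GY H \<rho>) (ZY B H \<rho>))
               (induced H \<rho> \<iota>)
      \<and> (\<forall>i0. \<xi> = (\<lambda>i. if i = i0 then 1 else 0) \<longrightarrow>
           diffeo (rpts (GY H \<rho>) (ZY B H \<rho>)) (r_open (GY H \<rho>) (ZY B H \<rho>))
                  (r_smooth (MY H) (GY H \<rho>) (ZY B H \<rho>))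
                  UNIV open smooth_on (Pbar \<xi>)
           \<and> (\<forall>w. orb (GY H \<rho>) (1, 0, \<chi> i. if i = i0 then w else 0) \<in> rpts (GY H \<rho>) (ZY B H \<rho>)
                 \<and> Pbar \<xi> (orb (GY H \<rho>) (1, 0, \<chi> i. if i = i0 then w else 0)) = w)
           \<and> (\<forall>c\<in>rpts (GY H \<rho>) (ZY B H \<rho>).
                 orb (GY H \<rho>) (1, 0, \<chi> i. if i = i0 then Pbar \<xi> c else 0) = c))"
proof -
  interpret LM H \<rho> B \<xi> \<iota>
    by (unfold_locales) (fact H dimm \<rho>_hom \<rho>_cont \<rho>_inj \<rho>_torus B_sym B_pos \<xi>_def \<iota>_inj \<xi>_supp)+
  have P1: "\<forall>z\<in>ZK (Kgrp \<iota> \<xi>). inclY \<iota> z \<in> ZY B H \<rho> \<and>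
             induced H \<rho> \<iota> (orb (GK (Kgrp \<iota> \<xi>)) z) = orb (GY H \<rho>) (inclY \<iota> z)"
    by (rule first_part)
  have P2: "diffeo (rpts (GK (Kgrp \<iota> \<xi>)) (ZK (Kgrp \<iota> \<xi>)))
               (r_open (GK (Kgrp \<iota> \<xi>)) (ZK (Kgrp \<iota> \<xi>)))
               (r_smooth UNIV (GK (Kgrp \<iota> \<xi>)) (ZK (Kgrp \<iota> \<xi>)))
               (rpts (GY H \<rho>) (ZY B H \<rho>)) (r_open (GY H \<rho>) (ZY B H \<rho>))
               (r_smooth (MY H) (GY H \<rho>) (ZY B H \<rho>))
               (induced H \<rho> \<iota>)"
    by (rule main_diffeo)
  have P3: "diffeo (rpts (GY H \<rho>) (ZY B H \<rho>)) (r_open (GY H \<rho>) (ZY B H \<rho>))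
                  (r_smooth (MY H) (GY H \<rho>) (ZY B H \<rho>))
                  UNIV open smooth_on (Pbar \<xi>)
           \<and> (\<forall>w. orb (GY H \<rho>) (1, 0, \<chi> i. if i = i0 then w else 0) \<in> rpts (GY H \<rho>) (ZY B H \<rho>)
                 \<and> Pbar \<xi> (orb (GY H \<rho>) (1, 0, \<chi> i. if i = i0 then w else 0)) = w)
           \<and> (\<forall>c\<in>rpts (GY H \<rho>) (ZY B H \<rho>).
                 orb (GY H \<rho>) (1, 0, \<chi> i. if i = i0 then Pbar \<xi> c else 0) = c)"
    if xi0: "\<xi> = (\<lambda>i. if i = i0 then 1 else 0)" for i0
  proof -
    interpret LMC H \<rho> B \<xi> \<iota> i0 by unfold_locales (rule xi0)
    show ?thesis using C_part unfolding emb_def .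
  qed
  show ?thesis using P1 P2 P3 by blast
qed

end
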